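(* Let $(V_1,V_2)$ be a pair of commuting isometries on a Hilbert space $\mathcal H$ with $C(V_1,V_2)=0$ and $\ker (V_1V_2)^*\neq\{0\}$. Let $(\mathcal E,P,U)$ be the BCL triple for $(V_1,V_2)$ with associated functions $\varphi_1,\varphi_2$, and let $U_1=U|_{\operatorname{ran}P}$, $U_2=U|_{\operatorname{ran}P^\perp}$ (these subspaces reduce $U$). Then for $z\in\mathbb D$, $$\sigma(\varphi_1(z),\varphi_2(z))=\begin{cases}\{(z\overline{\lambda},\lambda):\lambda\in\sigma(U_1)\}&\text{if }V_2\text{ is a unitary},\\ \{(\overline{\mu},z\mu):\mu\in\sigma(U_2)\}&\text{if }V_1\text{ is a unitary},\\ \{(z\overline\lambda,\lambda),(\overline\mu,z\mu):\lambda\in\sigma(U_1),\ \mu\in\sigma(U_2)\}&\text{otherwise.}\end{cases}$$ For every point $(z_1,z_2)$ in this joint spectrum, the non-singularity of the Koszul complex of $(\varphi_1(z)-z_1I,\varphi_2(z)-z_2I)$ breaks at stage 3.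
   Context: Defect operator: $C(V_1,V_2)=I-V_1V_1^*-V_2V_2^*+V_1V_2V_2^*V_1^*$. Given a Hilbert space $\mathcal E$, a projection $P$ and unitary $U$ on $\mathcal E$, set $P^\perp=I-P$, $\varphi_1(z)=U^*(P^\perp+zP)$, $\varphi_2(z)=(P+zP^\perp)U$ ($z\in\mathbb D$). Berger–Coburn–Lebow theorem: for commuting isometries $(V_1,V_2)$ on $\mathcal H$, $\mathcal H=\mathcal H_p\oplus\mathcal H_u$ (jointly reducing), $V_i|_{\mathcal H_u}$ commuting unitaries, and there is a triple $(\mathcal E,P,U)$, unique up to unitary equivalence, with $(V_1|_{\mathcal H_p},V_2|_{\mathcal H_p})$ unitarily equal to the multiplication operators $(M_{\varphi_1},M_{\varphi_2})$ on the Hardy space $H^2_{\mathbb D}(\mathcal E)$ ($\mathcal E\cong\ker(V_1V_2)^*$); this is the BCL triple. Koszul complex of commuting $T_1,T_2$ on $\mathcal H$: $0\to\mathcal H\xrightarrow{\delta_1}\mathcal H\oplus\mathcal H\xrightarrow{\delta_2}\mathcal H\to0$, $\delta_1h=(T_1h,T_2h)$, $\delta_2(h_1,h_2)=T_1h_2-T_2h_1$; $\sigma(T_1,T_2)$ is the Taylor joint spectrum (points where the complex of $(T_1-\lambda_1,T_2-\lambda_2)$ is not exact); breaking at stage 3 means $\operatorname{ran}(T_1-\lambda_1)+\operatorname{ran}(T_2-\lambda_2)\neq\mathcal H$. *)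

theory Defs
  imports "HOL-Analysis.Analysis"
begin

class complex_inner = real_normed_vector +
  fixes scaleC :: "complex \<Rightarrow> 'a \<Rightarrow> 'a" (infixr \<open>*\<^sub>C\<close> 75)
    and cinner :: "'a \<Rightarrow> 'a \<Rightarrow> complex"
  assumes scaleC_add_right: "a *\<^sub>C (x + y) = a *\<^sub>C x + a *\<^sub>C y"
    and scaleC_add_left: "(a + b) *\<^sub>C x = a *\<^sub>C x + b *\<^sub>C x"
    and scaleC_scaleC: "a *\<^sub>C (b *\<^sub>C x) = (a * b) *\<^sub>C x"
    and scaleC_one: "1 *\<^sub>C x = x"
    and scaleC_of_real: "complex_of_real r *\<^sub>C x = r *\<^sub>R x"
    and cinner_cnj_commute: "cinner x y = cnj (cinner y x)"
    and cinner_add_left: "cinner (x + y) z = cinner x z + cinner y z"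
    and cinner_scaleC_left: "cinner (a *\<^sub>C x) y = a * cinner x y"
    and cinner_norm: "cinner x x = complex_of_real ((norm x)\<^sup>2)"

class complex_hilbert = complex_inner + complete_space

text \<open>Consistency check: the complex numbers form a complex Hilbert space.\<close>
instantiation complex :: complex_inner
begin
definition scaleC_complex :: "complex \<Rightarrow> complex \<Rightarrow> complex" where
  "scaleC_complex a x = a * x"
definition cinner_complex :: "complex \<Rightarrow> complex \<Rightarrow> complex" where
  "cinner_complex x y = x * cnj y"
instance
proof
  fix a b :: complex and x y z :: complex and r :: real
  show "a *\<^sub>C (x + y) = a *\<^sub>C x + a *\<^sub>C y"
    by (simp add: scaleC_complex_def distrib_left)
  show "(a + b) *\<^sub>C x = a *\<^sub>C x + b *\<^sub>C x"
    by (simp add: scaleC_complex_def distrib_right)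
  show "a *\<^sub>C (b *\<^sub>C x) = (a * b) *\<^sub>C x"
    by (simp add: scaleC_complex_def mult.assoc)
  show "1 *\<^sub>C x = x"
    by (simp add: scaleC_complex_def)
  show "complex_of_real r *\<^sub>C x = r *\<^sub>R x"
    by (simp add: scaleC_complex_def scaleR_conv_of_real)
  show "cinner x y = cnj (cinner y x)"
    by (simp add: cinner_complex_def mult.commute)
  show "cinner (x + y) z = cinner x z + cinner y z"
    by (simp add: cinner_complex_def distrib_right)
  show "cinner (a *\<^sub>C x) y = a * cinner x y"
    by (simp add: cinner_complex_def scaleC_complex_def mult.assoc)
  show "cinner x x = complex_of_real ((norm x)\<^sup>2)"
    by (simp only: cinner_complex_def complex_norm_square)
qed
end

instance complex :: complex_hilbert ..

definition bounded_clinear :: "('a::complex_inner \<Rightarrow> 'b::complex_inner) \<Rightarrow> bool" where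
  "bounded_clinear T \<longleftrightarrow> (\<forall>x y. T (x + y) = T x + T y) \<and> (\<forall>c x. T (c *\<^sub>C x) = c *\<^sub>C T x)
     \<and> (\<exists>K. \<forall>x. norm (T x) \<le> norm x * K)"

text \<open>Hilbert-space adjoint (exists uniquely for bounded operators by Riesz).\<close>
definition cadjoint :: "('a::complex_inner \<Rightarrow> 'a) \<Rightarrow> 'a \<Rightarrow> 'a" where
  "cadjoint T = (SOME S. \<forall>x y. cinner (T x) y = cinner x (S y))"

definition isometry :: "('a::complex_inner \<Rightarrow> 'a) \<Rightarrow> bool" where
  "isometry V \<longleftrightarrow> bounded_clinear V \<and> (\<forall>x. norm (V x) = norm x)"

definition unitary :: "('a::complex_inner \<Rightarrow> 'a) \<Rightarrow> bool" where
  "unitary U \<longleftrightarrow> isometry U \<and> surj U"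

definition projection :: "('a::complex_inner \<Rightarrow> 'a) \<Rightarrow> bool" where
  "projection P \<longleftrightarrow> bounded_clinear P \<and> P \<circ> P = P \<and> cadjoint P = P"

definition defect :: "('a::complex_inner \<Rightarrow> 'a) \<Rightarrow> ('a \<Rightarrow> 'a) \<Rightarrow> 'a \<Rightarrow> 'a" where
  "defect V1 V2 = (\<lambda>x. x - V1 (cadjoint V1 x) - V2 (cadjoint V2 x)
                      + V1 (V2 (cadjoint V2 (cadjoint V1 x))))"

definition csubspace :: "'a::complex_inner set \<Rightarrow> bool" where
  "csubspace S \<longleftrightarrow> 0 \<in> S \<and> (\<forall>x\<in>S. \<forall>y\<in>S. x + y \<in> S) \<and> (\<forall>c. \<forall>x\<in>S. c *\<^sub>C x \<in> S)"

definition closed_csubspace :: "'a::complex_inner set \<Rightarrow> bool" where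
  "closed_csubspace S \<longleftrightarrow> csubspace S \<and> closed S"

definition reduces :: "'a::complex_inner set \<Rightarrow> ('a \<Rightarrow> 'a) \<Rightarrow> bool" where
  "reduces S T \<longleftrightarrow> T ` S \<subseteq> S \<and> cadjoint T ` S \<subseteq> S"

definition spectrum_on :: "'a::complex_inner set \<Rightarrow> ('a \<Rightarrow> 'a) \<Rightarrow> complex set" where
  "spectrum_on S T = {l. \<not> (\<exists>R. (\<forall>x\<in>S. R x \<in> S)
        \<and> (\<forall>x\<in>S. R (T x - l *\<^sub>C x) = x \<and> T (R x) - l *\<^sub>C R x = x)
        \<and> (\<exists>K. \<forall>x\<in>S. norm (R x) \<le> K * norm x))}"

text \<open>Exactness of \<open>0 \<rightarrow> H \<rightarrow> H\<oplus>H \<rightarrow> H \<rightarrow> 0\<close>, \<open>\<delta>\<^sub>1 h = (A h, B h)\<close>,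
  \<open>\<delta>\<^sub>2 (h\<^sub>1,h\<^sub>2) = A h\<^sub>2 - B h\<^sub>1\<close>.\<close>
definition koszul_exact :: "('a::complex_inner \<Rightarrow> 'a) \<Rightarrow> ('a \<Rightarrow> 'a) \<Rightarrow> bool" where
  "koszul_exact A B \<longleftrightarrow>
     {h. (A h, B h) = (0, 0)} = {0}
   \<and> {(h1, h2). A h2 - B h1 = 0} = (\<lambda>h. (A h, B h)) ` UNIV
   \<and> (\<lambda>(h1, h2). A h2 - B h1) ` UNIV = UNIV"

definition taylor_spectrum :: "('a::complex_inner \<Rightarrow> 'a) \<Rightarrow> ('a \<Rightarrow> 'a) \<Rightarrow> (complex \<times> complex) set" where
  "taylor_spectrum T1 T2 =
     {(l1, l2). \<not> koszul_exact (\<lambda>x. T1 x - l1 *\<^sub>C x) (\<lambda>x. T2 x - l2 *\<^sub>C x)}"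

definition koszul_breaks_stage3 :: "('a::complex_inner \<Rightarrow> 'a) \<Rightarrow> ('a \<Rightarrow> 'a) \<Rightarrow> bool" where
  "koszul_breaks_stage3 A B \<longleftrightarrow> {A x + B y | x y. True} \<noteq> UNIV"

definition bcl_phi1 :: "('e::complex_inner \<Rightarrow> 'e) \<Rightarrow> ('e \<Rightarrow> 'e) \<Rightarrow> complex \<Rightarrow> 'e \<Rightarrow> 'e" where
  "bcl_phi1 P U z = (\<lambda>x. cadjoint U ((x - P x) + z *\<^sub>C P x))"

definition bcl_phi2 :: "('e::complex_inner \<Rightarrow> 'e) \<Rightarrow> ('e \<Rightarrow> 'e) \<Rightarrow> complex \<Rightarrow> 'e \<Rightarrow> 'e" where
  "bcl_phi2 P U z = (\<lambda>x. P (U x) + z *\<^sub>C (U x - P (U x)))"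

text \<open>Hardy space \<open>H\<^sup>2(E)\<close> given by its square-summable Taylor coefficient sequences;
  \<open>hardy_fun a\<close> is the \<open>E\<close>-valued function \<open>z \<mapsto> \<Sum> a\<^sub>n z\<^sup>n\<close> on the disc.\<close>
definition l2_seqs :: "(nat \<Rightarrow> 'e::complex_inner) set" where
  "l2_seqs = {a. summable (\<lambda>n. (norm (a n))\<^sup>2)}"

definition hardy_fun :: "(nat \<Rightarrow> 'e::complex_inner) \<Rightarrow> complex \<Rightarrow> 'e" where
  "hardy_fun a z = (\<Sum>n. (z ^ n) *\<^sub>C a n)"

text \<open>\<open>(\<E>,P,U)\<close> is a BCL triple for \<open>(V\<^sub>1,V\<^sub>2)\<close>: \<open>H = H\<^sub>p \<oplus> H\<^sub>u\<close> jointly reducing,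
  \<open>V\<^sub>i|H\<^sub>u\<close> unitary, and \<open>(V\<^sub>1|H\<^sub>p,V\<^sub>2|H\<^sub>p)\<close> unitarily equivalent to
  \<open>(M\<^sub>\<phi>\<^sub>1, M\<^sub>\<phi>\<^sub>2)\<close> on \<open>H\<^sup>2(\<E>)\<close>.\<close>
definition bcl_triple :: "('h::complex_hilbert \<Rightarrow> 'h) \<Rightarrow> ('h \<Rightarrow> 'h)
      \<Rightarrow> ('e::complex_hilbert \<Rightarrow> 'e) \<Rightarrow> ('e \<Rightarrow> 'e) \<Rightarrow> bool" where
  "bcl_triple V1 V2 P U \<longleftrightarrow> projection P \<and> unitary U \<and>
    (\<exists>Hp Hu W. closed_csubspace Hp \<and> closed_csubspace Hu
       \<and> (\<forall>x\<in>Hp. \<forall>y\<in>Hu. cinner x y = 0) \<and> (\<forall>h. \<exists>x\<in>Hp. \<exists>y\<in>Hu. h = x + y)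
       \<and> reduces Hp V1 \<and> reduces Hp V2 \<and> reduces Hu V1 \<and> reduces Hu V2
       \<and> V1 ` Hu = Hu \<and> V2 ` Hu = Hu
       \<and> bij_betw W Hp l2_seqs
       \<and> (\<forall>x\<in>Hp. \<forall>y\<in>Hp. W (x + y) = (\<lambda>n. W x n + W y n))
       \<and> (\<forall>c. \<forall>x\<in>Hp. W (c *\<^sub>C x) = (\<lambda>n. c *\<^sub>C W x n))
       \<and> (\<forall>x\<in>Hp. (\<Sum>n. (norm (W x n))\<^sup>2) = (norm x)\<^sup>2)
       \<and> (\<forall>x\<in>Hp. \<forall>z. norm z < 1 \<longrightarrow>
            hardy_fun (W (V1 x)) z = bcl_phi1 P U z (hardy_fun (W x) z)
          \<and> hardy_fun (W (V2 x)) z = bcl_phi2 P U z (hardy_fun (W x) z)))"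

end

theory Submission
  imports Defs
begin


lemma scaleC_zero_left [simp]: "(0::complex) *\<^sub>C (x::'a::complex_inner) = 0"
  using scaleC_of_real[of 0 x] by simp

lemma scaleC_zero_right [simp]: "c *\<^sub>C (0::'a::complex_inner) = 0"
proof -
  have "c *\<^sub>C (0::'a) = c *\<^sub>C 0 + c *\<^sub>C 0" using scaleC_add_right[of c "0::'a" 0] by simp
  then show ?thesis by simp
qed

lemma scaleC_minus_left: "(- c) *\<^sub>C (x::'a::complex_inner) = - (c *\<^sub>C x)"
proof -
  have "(- c) *\<^sub>C x + c *\<^sub>C x = 0" using scaleC_add_left[of "-c" c x, symmetric] by simp
  then show ?thesis by (simp add: eq_neg_iff_add_eq_0)
qed

lemma scaleC_minus_right: "c *\<^sub>C (- x::'a::complex_inner) = - (c *\<^sub>C x)"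
proof -
  have "c *\<^sub>C (- x) + c *\<^sub>C x = 0" using scaleC_add_right[of c "-x" x, symmetric] by simp
  then show ?thesis by (simp add: eq_neg_iff_add_eq_0)
qed

lemma scaleC_diff_right: "c *\<^sub>C (x - y::'a::complex_inner) = c *\<^sub>C x - c *\<^sub>C y"
  using scaleC_add_right[of c x "-y"] scaleC_minus_right[of c y] by simp

lemma scaleC_diff_left: "(a - b) *\<^sub>C (x::'a::complex_inner) = a *\<^sub>C x - b *\<^sub>C x"
  using scaleC_add_left[of a "-b" x] scaleC_minus_left[of b x] by simp

lemma scaleC_minus1: "(-1) *\<^sub>C (x::'a::complex_inner) = - x"
  by (simp add: scaleC_minus_left scaleC_one)

lemma cinner_scaleC_right: "cinner x (c *\<^sub>C y) = cnj c * cinner (x::'a::complex_inner) y"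
  by (subst cinner_cnj_commute) (simp add: cinner_scaleC_left cinner_cnj_commute[of y x])

lemma cinner_add_right: "cinner x (y + z) = cinner x y + cinner (x::'a::complex_inner) z"
  by (subst cinner_cnj_commute) (simp add: cinner_add_left cinner_cnj_commute[of y x] cinner_cnj_commute[of z x])

lemma cinner_zero_left [simp]: "cinner 0 (x::'a::complex_inner) = 0"
  using cinner_add_left[of 0 0 x] by simp

lemma cinner_zero_right [simp]: "cinner (x::'a::complex_inner) 0 = 0"
  using cinner_add_right[of x 0 0] by simp

lemma cinner_minus_left: "cinner (- x) (y::'a::complex_inner) = - cinner x y"
  using cinner_add_left[of "-x" x y] by (simp add: eq_neg_iff_add_eq_0)

lemma cinner_minus_right: "cinner x (- y::'a::complex_inner) = - cinner x y"
  using cinner_add_right[of x "-y" y] by (simp add: eq_neg_iff_add_eq_0)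

lemma cinner_diff_left: "cinner (x - y) (z::'a::complex_inner) = cinner x z - cinner y z"
  using cinner_add_left[of x "-y" z] cinner_minus_left[of y z] by simp

lemma cinner_diff_right: "cinner x (y - z::'a::complex_inner) = cinner x y - cinner x z"
  using cinner_add_right[of x y "-z"] cinner_minus_right[of x z] by simp

lemma cinner_self_zero_iff: "cinner x (x::'a::complex_inner) = 0 \<longleftrightarrow> x = 0"
  using cinner_norm[of x] by simp

lemma cinner_self_eq: "cinner x (x::'a::complex_inner) = complex_of_real ((norm x)\<^sup>2)"
  by (rule cinner_norm)

lemma norm_scaleC: "norm (c *\<^sub>C (x::'a::complex_inner)) = cmod c * norm x"
proof -
  have "complex_of_real ((norm (c *\<^sub>C x))\<^sup>2) = cinner (c *\<^sub>C x) (c *\<^sub>C x)" by (rule cinner_norm[symmetric])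
  also have "... = (c * cnj c) * cinner x x" by (simp add: cinner_scaleC_left cinner_scaleC_right)
  also have "... = complex_of_real ((cmod c * norm x)\<^sup>2)"
    by (simp only: complex_norm_square[symmetric] cinner_norm of_real_mult[symmetric] power_mult_distrib)
  finally have "(norm (c *\<^sub>C x))\<^sup>2 = (cmod c * norm x)\<^sup>2"
    by (simp only: of_real_eq_iff)
  then show ?thesis by (simp add: power2_eq_iff_nonneg)
qed

lemma cinner_ext: "(\<And>y. cinner x y = cinner (z::'a::complex_inner) y) \<Longrightarrow> x = z"
proof -
  assume h: "\<And>y. cinner x y = cinner z y"
  have "cinner (x - z) (x - z) = 0" by (simp add: cinner_diff_left h)
  then show ?thesis by (simp add: cinner_self_zero_iff)
qed

lemma cinner_ext_right: "(\<And>y. cinner y x = cinner y (z::'a::complex_inner)) \<Longrightarrow> x = z"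
proof -
  assume h: "\<And>y. cinner y x = cinner y z"
  have "cinner (x - z) (x - z) = 0" by (simp add: cinner_diff_right h)
  then show ?thesis by (simp add: cinner_self_zero_iff)
qed

lemma norm_sq_add: "(norm (x + y::'a::complex_inner))\<^sup>2 = (norm x)\<^sup>2 + (norm y)\<^sup>2 + 2 * Re (cinner x y)"
proof -
  have "complex_of_real ((norm (x + y))\<^sup>2) = cinner (x + y) (x + y)" by (rule cinner_norm[symmetric])
  also have "... = cinner x x + cinner y y + (cinner x y + cnj (cinner x y))"
    by (simp add: cinner_add_left cinner_add_right cinner_cnj_commute[of y x])
  also have "cinner x y + cnj (cinner x y) = complex_of_real (2 * Re (cinner x y))"
    by (simp add: complex_add_cnj)
  finally have "complex_of_real ((norm (x + y))\<^sup>2) = complex_of_real ((norm x)\<^sup>2 + (norm y)\<^sup>2 + 2 * Re (cinner x y))"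
    by (simp only: cinner_norm of_real_add)
  then show ?thesis by (simp only: of_real_eq_iff)
qed

lemma cauchy_schwarz: "cmod (cinner x y) \<le> norm x * norm (y::'a::complex_inner)"
proof (cases "y = 0")
  case True then show ?thesis by simp
next
  case False
  define t where "t = cinner x y / complex_of_real ((norm y)\<^sup>2)"
  have ny: "norm y > 0" using False by simp
  have "0 \<le> (norm (x - t *\<^sub>C y))\<^sup>2" by simp
  have "complex_of_real ((norm (x - t *\<^sub>C y))\<^sup>2) = cinner (x - t *\<^sub>C y) (x - t *\<^sub>C y)" by (rule cinner_norm[symmetric])
  also have "... = cinner x x - cnj t * cinner x y - t * cinner y x + t * cnj t * cinner y y"
    by (simp add: cinner_diff_left cinner_diff_right cinner_scaleC_left cinner_scaleC_right algebra_simps)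
  also have "... = complex_of_real ((norm x)\<^sup>2 - (cmod (cinner x y))\<^sup>2 / (norm y)\<^sup>2)"
  proof -
    have a: "cinner y x = cnj (cinner x y)" by (rule cinner_cnj_commute)
    have b: "cinner x y * cnj (cinner x y) = complex_of_real ((cmod (cinner x y))\<^sup>2)" by (rule complex_norm_square[symmetric])
    have c: "complex_of_real ((norm y)\<^sup>2) \<noteq> 0" using ny by simp
    show ?thesis unfolding a t_def cinner_norm using b c
      by (simp add: field_simps power2_eq_square)
  qed
  finally have "(norm (x - t *\<^sub>C y))\<^sup>2 = (norm x)\<^sup>2 - (cmod (cinner x y))\<^sup>2 / (norm y)\<^sup>2"
    by (simp only: of_real_eq_iff)
  with \<open>0 \<le> _\<close> have "(cmod (cinner x y))\<^sup>2 / (norm y)\<^sup>2 \<le> (norm x)\<^sup>2" by simp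
  then have "(cmod (cinner x y))\<^sup>2 \<le> (norm x * norm y)\<^sup>2" using ny by (simp add: field_simps power_mult_distrib)
  then show ?thesis using power2_le_imp_le by (metis mult_nonneg_nonneg norm_ge_zero)
qed


lemma bcl_add: "bounded_clinear T \<Longrightarrow> T (x + y) = T x + T y"
  by (simp add: bounded_clinear_def)
lemma bcl_scaleC: "bounded_clinear T \<Longrightarrow> T (c *\<^sub>C x) = c *\<^sub>C T x"
  by (simp add: bounded_clinear_def)
lemma bcl_zero: "bounded_clinear (T::'a::complex_inner \<Rightarrow> 'b::complex_inner) \<Longrightarrow> T 0 = 0"
  using bcl_scaleC[of T 0 0] by simp
lemma bcl_minus: "bounded_clinear (T::'a::complex_inner \<Rightarrow> 'b::complex_inner) \<Longrightarrow> T (- x) = - T x"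
  using bcl_scaleC[of T "-1" x] by (simp add: scaleC_minus1)
lemma bcl_diff: "bounded_clinear (T::'a::complex_inner \<Rightarrow> 'b::complex_inner) \<Longrightarrow> T (x - y) = T x - T y"
  using bcl_add[of T x "-y"] bcl_minus[of T y] by simp
lemma bcl_bounded_linear: "bounded_clinear (T::'a::complex_inner \<Rightarrow> 'b::complex_inner) \<Longrightarrow> bounded_linear T"
proof -
  assume a: "bounded_clinear T"
  then obtain K where K: "\<And>x. norm (T x) \<le> norm x * K" by (auto simp: bounded_clinear_def)
  show ?thesis
  proof (rule bounded_linear_intro[OF _ _ K])
    show "T (x + y) = T x + T y" for x y using a by (rule bcl_add)
    show "T (r *\<^sub>R x) = r *\<^sub>R T x" for r x
      using bcl_scaleC[OF a, of "complex_of_real r" x] by (simp add: scaleC_of_real)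
  qed
qed

lemma norm_sq_diff: "(norm (x - y::'a::complex_inner))\<^sup>2 = (norm x)\<^sup>2 + (norm y)\<^sup>2 - 2 * Re (cinner x y)"
  using norm_sq_add[of x "-y"] by (simp add: cinner_minus_right)

lemma parallelogram: "(norm (x + y::'a::complex_inner))\<^sup>2 + (norm (x - y))\<^sup>2 = 2 * (norm x)\<^sup>2 + 2 * (norm y)\<^sup>2"
  using norm_sq_add[of x y] norm_sq_diff[of x y] by simp

lemma riesz:
  fixes f :: "'a::complex_hilbert \<Rightarrow> complex"
  assumes add: "\<And>x y. f (x + y) = f x + f y" and sc: "\<And>c x. f (c *\<^sub>C x) = c * f x"
    and bd: "\<And>x. cmod (f x) \<le> norm x * K"
  shows "\<exists>r. \<forall>x. f x = cinner x r"
proof (cases "\<forall>x. f x = 0")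
  case True then show ?thesis by (intro exI[of _ 0]) simp
next
  case False
  then obtain u where fu: "f u \<noteq> 0" by blast
  have f0: "f 0 = 0" using sc[of 0 0] by simp
  have fdiff: "f (x - y) = f x - f y" for x y
    using add[of x "-y"] sc[of "-1" y] by (simp add: scaleC_minus1)
  have bl: "bounded_linear f"
  proof (rule bounded_linear_intro[OF add _ bd])
    show "f (r *\<^sub>R x) = r *\<^sub>R f x" for r x
      using sc[of "complex_of_real r" x] by (simp add: scaleC_of_real scaleR_conv_of_real)
  qed
  define M where "M = {m. f m = 0}"
  have Madd: "x \<in> M \<Longrightarrow> y \<in> M \<Longrightarrow> x + y \<in> M" for x y by (simp add: M_def add)
  have Msc: "x \<in> M \<Longrightarrow> c *\<^sub>C x \<in> M" for x c by (simp add: M_def sc)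
  have Mlim: "(\<And>n. X n \<in> M) \<Longrightarrow> X \<longlonglongrightarrow> l \<Longrightarrow> l \<in> M" for X l
  proof -
    assume XM: "\<And>n. X n \<in> M" and Xl: "X \<longlonglongrightarrow> l"
    have "(\<lambda>n. f (X n)) \<longlonglongrightarrow> f l" using bounded_linear.tendsto[OF bl Xl] .
    moreover have "(\<lambda>n. f (X n)) = (\<lambda>n. 0)" using XM by (simp add: M_def)
    ultimately have "(\<lambda>n. 0::complex) \<longlonglongrightarrow> f l" by simp
    then have "f l = 0" using LIMSEQ_unique tendsto_const by blast
    then show "l \<in> M" by (simp add: M_def)
  qed
  define D where "D = (\<lambda>m. norm (u - m)) ` M"
  define d where "d = Inf D"
  have D0: "D \<noteq> {}" using f0 by (auto simp: D_def M_def)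
  have Dbdd: "bdd_below D" by (auto simp: D_def intro!: bdd_belowI[of _ 0])
  have dle: "d \<le> norm (u - m)" if "m \<in> M" for m
    unfolding d_def by (rule cInf_lower[OF _ Dbdd]) (use that in \<open>auto simp: D_def\<close>)
  have d0: "0 \<le> d" unfolding d_def by (rule cInf_greatest[OF D0]) (auto simp: D_def)
  have "\<exists>m\<in>M. norm (u - m) < d + 1 / (real n + 1)" for n
  proof -
    have "Inf D < d + 1 / (real n + 1)" by (simp add: d_def)
    from cInf_lessD[OF D0 this] show ?thesis by (auto simp: D_def)
  qed
  then obtain mm where mmM: "\<And>n. mm n \<in> M" and mmd: "\<And>n. norm (u - mm n) < d + 1 / (real n + 1)"
    by metis
  have key: "(norm (mm n - mm k))\<^sup>2 \<le> 2 * (d + 1 / (real n + 1))\<^sup>2 + 2 * (d + 1 / (real k + 1))\<^sup>2 - 4 * d\<^sup>2" for n k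
  proof -
    have mid: "(1/2::complex) *\<^sub>C (mm n + mm k) \<in> M" using Madd Msc mmM by blast
    have "d \<le> norm (u - (1/2::complex) *\<^sub>C (mm n + mm k))" by (rule dle[OF mid])
    also have "u - (1/2::complex) *\<^sub>C (mm n + mm k) = (1/2::real) *\<^sub>R ((u - mm n) + (u - mm k))"
    proof -
      have "(1/2::complex) *\<^sub>C (mm n + mm k) = (1/2::real) *\<^sub>R (mm n + mm k)"
        using scaleC_of_real[of "1/2" "mm n + mm k"] by simp
      moreover have "(u - mm n) + (u - mm k) = (u + u) - (mm n + mm k)" by (simp add: algebra_simps)
      ultimately show ?thesis by (simp only: scaleR_diff_right scaleR_half_double)
    qed
    finally have h1: "2 * d \<le> norm ((u - mm n) + (u - mm k))" by simp
    have h2: "(2 * d)\<^sup>2 \<le> (norm ((u - mm n) + (u - mm k)))\<^sup>2"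
      using power_mono[OF h1, of 2] d0 by simp
    have pl: "(norm ((u - mm n) + (u - mm k)))\<^sup>2 + (norm ((u - mm n) - (u - mm k)))\<^sup>2
        = 2 * (norm (u - mm n))\<^sup>2 + 2 * (norm (u - mm k))\<^sup>2" by (rule parallelogram)
    have e: "(u - mm n) - (u - mm k) = - (mm n - mm k)" by simp
    have a1: "(norm (u - mm n))\<^sup>2 \<le> (d + 1 / (real n + 1))\<^sup>2"
      using mmd[of n] by (simp add: power_mono less_imp_le)
    have a2: "(norm (u - mm k))\<^sup>2 \<le> (d + 1 / (real k + 1))\<^sup>2"
      using mmd[of k] by (simp add: power_mono less_imp_le)
    show ?thesis using pl h2 a1 a2 unfolding e norm_minus_cancel by (simp add: power_mult_distrib)
  qed
  have cauchy: "Cauchy mm"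
  proof (rule metric_CauchyI)
    fix e :: real assume e: "0 < e"
    obtain N :: nat where N: "real N > 4 * (2 * d + 1) / e\<^sup>2" using reals_Archimedean2 by blast
    have "\<forall>n\<ge>N. \<forall>k\<ge>N. dist (mm n) (mm k) < e"
    proof (intro allI impI)
      fix n k assume nN: "n \<ge> N" and kN: "k \<ge> N"
      define b where "b = 1 / (real N + 1)"
      have b0: "0 < b" "b \<le> 1" by (auto simp: b_def)
      have bn: "1 / (real n + 1) \<le> b" "1 / (real k + 1) \<le> b"
        using nN kN by (auto simp: b_def frac_le)
      have "(norm (mm n - mm k))\<^sup>2 \<le> 2 * (d + b)\<^sup>2 + 2 * (d + b)\<^sup>2 - 4 * d\<^sup>2"
        using key[of n k] bn d0 b0
        by (smt (verit) divide_nonneg_nonneg of_nat_0_le_iff power_mono)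
      also have "... = 4 * b * (2 * d + b)" by (simp add: power2_eq_square algebra_simps)
      also have "... \<le> 4 * b * (2 * d + 1)" using b0 d0 by simp
      also have "... < e\<^sup>2"
      proof -
        have "4 * (2 * d + 1) < e\<^sup>2 * (real N + 1)"
          using N e by (simp add: field_simps) (smt (verit) zero_less_power)
        then show ?thesis using b0 by (simp add: b_def field_simps)
      qed
      finally have "(norm (mm n - mm k))\<^sup>2 < e\<^sup>2" .
      then have "norm (mm n - mm k) < e" using e by (simp add: power_less_imp_less_base)
      then show "dist (mm n) (mm k) < e" by (simp add: dist_norm)
    qed
    then show "\<exists>N. \<forall>n\<ge>N. \<forall>k\<ge>N. dist (mm n) (mm k) < e" by blast
  qed
  then obtain m where mlim: "mm \<longlonglongrightarrow> m" using Cauchy_convergent_iff convergent_def by blast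
  have mM: "m \<in> M" using Mlim[OF mmM mlim] .
  have "norm (u - m) \<le> d"
  proof (rule LIMSEQ_le[of "\<lambda>n. norm (u - mm n)" _ "\<lambda>n. d + 1 / (real n + 1)"])
    show "(\<lambda>n. norm (u - mm n)) \<longlonglongrightarrow> norm (u - m)" by (intro tendsto_intros mlim)
    show "(\<lambda>n. d + 1 / (real n + 1)) \<longlonglongrightarrow> d"
      using tendsto_add[OF tendsto_const[of d] LIMSEQ_inverse_real_of_nat] by (simp add: inverse_eq_divide add.commute)
    show "\<exists>N. \<forall>n\<ge>N. norm (u - mm n) \<le> d + 1 / (real n + 1)" using mmd less_imp_le by blast
  qed
  define z where "z = u - m"
  have nz: "norm z = d" using dle[OF mM] \<open>norm (u - m) \<le> d\<close> by (simp add: z_def)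
  have fz: "f z = f u" using mM by (simp add: z_def fdiff M_def)
  have zmin: "norm z \<le> norm (z - w)" if "w \<in> M" for w
  proof -
    have "m + w \<in> M" using Madd mM that by blast
    then have "d \<le> norm (u - (m + w))" by (rule dle)
    then show ?thesis by (metis nz z_def diff_diff_eq)
  qed
  have orth: "cinner z w = 0" if wM: "w \<in> M" for w
  proof -
    define a where "a = cinner z w"
    define s where "s = 1 / ((norm w)\<^sup>2 + 1)"
    have s0: "0 < s" unfolding s_def by (simp add: add_nonneg_pos)
    define t where "t = complex_of_real s * a"
    have "t *\<^sub>C w \<in> M" using Msc wM by blast
    then have "norm z \<le> norm (z - t *\<^sub>C w)" by (rule zmin)
    then have "(norm z)\<^sup>2 \<le> (norm (z - t *\<^sub>C w))\<^sup>2" by (simp add: power_mono)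
    also have "(norm (z - t *\<^sub>C w))\<^sup>2 = (norm z)\<^sup>2 + (cmod t * norm w)\<^sup>2 - 2 * Re (cinner z (t *\<^sub>C w))"
      by (simp add: norm_sq_diff norm_scaleC)
    also have "cinner z (t *\<^sub>C w) = complex_of_real (s * (cmod a)\<^sup>2)"
      using complex_norm_square[of a] by (simp add: cinner_scaleC_right t_def a_def mult.commute)
    also have "cmod t = s * cmod a" using s0 by (simp add: t_def norm_mult)
    finally have "2 * s * (cmod a)\<^sup>2 \<le> (s * cmod a * norm w)\<^sup>2" by simp
    then have "2 * s * (cmod a)\<^sup>2 \<le> s * (cmod a)\<^sup>2 * (s * (norm w)\<^sup>2)"
      by (simp add: power_mult_distrib power2_eq_square algebra_simps)
    moreover have "s * (norm w)\<^sup>2 \<le> 1"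
    proof -
      have "(norm w)\<^sup>2 \<le> (norm w)\<^sup>2 + 1" by simp
      then show ?thesis unfolding s_def by (simp add: divide_le_eq_1 add_nonneg_pos)
    qed
    moreover have "s * (cmod a)\<^sup>2 * (s * (norm w)\<^sup>2) \<le> s * (cmod a)\<^sup>2 * 1"
      by (rule mult_left_mono[OF calculation(2)]) (use s0 in simp)
    ultimately have "2 * s * (cmod a)\<^sup>2 \<le> s * (cmod a)\<^sup>2" by linarith
    then have "(cmod a)\<^sup>2 \<le> 0" using s0 by simp
    then show ?thesis by (simp add: a_def)
  qed
  have z0: "z \<noteq> 0" using fz fu f0 by auto
  have nz0: "norm z \<noteq> 0" using z0 by simp
  define r where "r = (cnj (f z) / complex_of_real ((norm z)\<^sup>2)) *\<^sub>C z"
  show ?thesis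
  proof (intro exI allI)
    fix x
    have wM: "x - (f x / f z) *\<^sub>C z \<in> M" using fz fu by (simp add: M_def fdiff sc)
    have "cinner (x - (f x / f z) *\<^sub>C z) z = 0"
      using orth[OF wM] by (subst cinner_cnj_commute) simp
    then have xz: "cinner x z = (f x / f z) * complex_of_real ((norm z)\<^sup>2)"
      by (simp add: cinner_diff_left cinner_scaleC_left cinner_norm)
    show "f x = cinner x r"
      unfolding r_def cinner_scaleC_right xz using fz fu nz0 by (simp add: field_simps)
  qed
qed

lemma adjoint_exists:
  fixes T :: "'a::complex_hilbert \<Rightarrow> 'a"
  assumes "bounded_clinear T"
  shows "\<exists>S. \<forall>x y. cinner (T x) y = cinner x (S y)"
proof -
  obtain K where K: "\<And>x. norm (T x) \<le> norm x * K" using assms by (auto simp: bounded_clinear_def)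
  have "\<exists>r. \<forall>x. cinner (T x) y = cinner x r" for y
  proof (rule riesz)
    show "cinner (T (x1 + x2)) y = cinner (T x1) y + cinner (T x2) y" for x1 x2
      by (simp add: bcl_add[OF assms] cinner_add_left)
    show "cinner (T (c *\<^sub>C x)) y = c * cinner (T x) y" for c x
      by (simp add: bcl_scaleC[OF assms] cinner_scaleC_left)
    show "cmod (cinner (T x) y) \<le> norm x * (K * norm y)" for x
      using cauchy_schwarz[of "T x" y] K[of x]
      by (smt (verit) mult.assoc mult_right_mono norm_ge_zero)
  qed
  then show ?thesis by metis
qed

lemma cadjoint_prop:
  fixes T :: "'a::complex_hilbert \<Rightarrow> 'a"
  assumes "bounded_clinear T"
  shows "cinner (T x) y = cinner x (cadjoint T y)"
proof -
  have "\<forall>x y. cinner (T x) y = cinner x (cadjoint T y)"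
    unfolding cadjoint_def by (rule someI_ex[OF adjoint_exists[OF assms]])
  then show ?thesis by blast
qed

lemma cadjoint_prop2:
  fixes T :: "'a::complex_hilbert \<Rightarrow> 'a"
  assumes "bounded_clinear T"
  shows "cinner (cadjoint T y) x = cinner y (T x)"
  using cadjoint_prop[OF assms, of x y] by (metis cinner_cnj_commute)


lemma isometry_bcl: "isometry V \<Longrightarrow> bounded_clinear V" by (simp add: isometry_def)
lemma isometry_norm: "isometry V \<Longrightarrow> norm (V x) = norm x" by (simp add: isometry_def)

lemma isometry_inner:
  assumes V: "isometry (V::'a::complex_inner \<Rightarrow> 'a)"
  shows "cinner (V x) (V y) = cinner x y"
proof -
  have bc: "bounded_clinear V" using V by (rule isometry_bcl)
  have re: "Re (cinner (V x) (V y)) = Re (cinner x y)" for x y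
  proof -
    have "(norm (V x + V y))\<^sup>2 = (norm (x + y))\<^sup>2" using isometry_norm[OF V, of "x + y"] bcl_add[OF bc] by simp
    then show ?thesis using norm_sq_add[of "V x" "V y"] norm_sq_add[of x y] isometry_norm[OF V] by simp
  qed
  have "Re (cinner (V x) (V (\<i> *\<^sub>C y))) = Re (cinner x (\<i> *\<^sub>C y))" by (rule re)
  then have im: "Im (cinner (V x) (V y)) = Im (cinner x y)"
    by (simp add: bcl_scaleC[OF bc] cinner_scaleC_right)
  show ?thesis using re[of x y] im by (simp add: complex_eqI)
qed

lemma unitary_facts:
  fixes U :: "'a::complex_hilbert \<Rightarrow> 'a"
  assumes U: "unitary U"
  shows "bounded_clinear U" "\<And>x. norm (U x) = norm x"
    and "\<And>x. cadjoint U (U x) = x" and "\<And>x. U (cadjoint U x) = x"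
    and "\<And>x y. cinner (U x) y = cinner x (cadjoint U y)"
    and "\<And>x y. cinner (cadjoint U x) y = cinner x (U y)"
    and "\<And>x y. cinner (U x) (U y) = cinner x y"
    and "bounded_clinear (cadjoint U)" and "\<And>x. norm (cadjoint U x) = norm x"
proof -
  have iso: "isometry U" and su: "surj U" using U by (auto simp: unitary_def)
  show bc: "bounded_clinear U" using iso by (rule isometry_bcl)
  show nU: "\<And>x. norm (U x) = norm x" using iso by (rule isometry_norm)
  show adj: "\<And>x y. cinner (U x) y = cinner x (cadjoint U y)" using cadjoint_prop[OF bc] by blast
  show adj2: "\<And>x y. cinner (cadjoint U x) y = cinner x (U y)" using cadjoint_prop2[OF bc] by blast
  show ii: "\<And>x y. cinner (U x) (U y) = cinner x y" using isometry_inner[OF iso] by blast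
  show l: "\<And>x. cadjoint U (U x) = x"
  proof -
    fix x
    show "cadjoint U (U x) = x"
      by (rule cinner_ext_right) (simp add: adj[symmetric] ii)
  qed
  show r: "\<And>x. U (cadjoint U x) = x"
  proof -
    fix x
    obtain w where "x = U w" using su by (metis surj_def)
    then show "U (cadjoint U x) = x" using l by simp
  qed
  show nA: "\<And>x. norm (cadjoint U x) = norm x" using nU r by metis
  show "bounded_clinear (cadjoint U)"
    unfolding bounded_clinear_def
  proof (intro conjI allI exI)
    fix x y
    have "cadjoint U (x + y) = cadjoint U (U (cadjoint U x) + U (cadjoint U y))" using r by simp
    also have "... = cadjoint U x + cadjoint U y" by (simp add: bcl_add[OF bc, symmetric] l)
    finally show "cadjoint U (x + y) = cadjoint U x + cadjoint U y" .
  next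
    fix c x
    have "cadjoint U (c *\<^sub>C x) = cadjoint U (c *\<^sub>C U (cadjoint U x))" using r by simp
    also have "... = c *\<^sub>C cadjoint U x" by (simp add: bcl_scaleC[OF bc, symmetric] l)
    finally show "cadjoint U (c *\<^sub>C x) = c *\<^sub>C cadjoint U x" .
  next
    fix x show "norm (cadjoint U x) \<le> norm x * 1" using nA by simp
  qed
qed

lemma projection_facts:
  fixes P :: "'a::complex_hilbert \<Rightarrow> 'a"
  assumes P: "projection P"
  shows "bounded_clinear P" "\<And>x. P (P x) = P x"
    and "\<And>x y. cinner (P x) y = cinner x (P y)"
    and "\<And>x y. cinner (P x) (y - P y) = 0"
    and "\<And>x. (norm x)\<^sup>2 = (norm (P x))\<^sup>2 + (norm (x - P x))\<^sup>2"
    and "\<And>x. P (x - P x) = 0"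
proof -
  show bc: "bounded_clinear P" using P by (simp add: projection_def)
  show idem: "\<And>x. P (P x) = P x" using P by (simp add: projection_def comp_def fun_eq_iff)
  show sa: "\<And>x y. cinner (P x) y = cinner x (P y)"
    using cadjoint_prop[OF bc] P by (simp add: projection_def)
  show orth: "\<And>x y. cinner (P x) (y - P y) = 0"
    by (simp add: sa bcl_diff[OF bc] idem)
  show "\<And>x. P (x - P x) = 0" by (simp add: bcl_diff[OF bc] idem)
  show "\<And>x. (norm x)\<^sup>2 = (norm (P x))\<^sup>2 + (norm (x - P x))\<^sup>2"
  proof -
    fix x
    have "(norm (P x + (x - P x)))\<^sup>2 = (norm (P x))\<^sup>2 + (norm (x - P x))\<^sup>2"
      by (simp only: norm_sq_add orth) simp
    then show "(norm x)\<^sup>2 = (norm (P x))\<^sup>2 + (norm (x - P x))\<^sup>2" by simp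
  qed
qed


definition dseq :: "'e::complex_inner \<Rightarrow> nat \<Rightarrow> 'e" where
  "dseq e = (\<lambda>n. if n = 0 then e else 0)"

lemma dseq_sums: "(\<lambda>n. (norm (dseq e n))\<^sup>2) sums (norm e)\<^sup>2"
proof -
  have "(\<lambda>n. (norm (dseq e n))\<^sup>2) = (\<lambda>n. if n = 0 then (\<lambda>_. (norm e)\<^sup>2) n else 0)"
    by (auto simp: dseq_def fun_eq_iff)
  then show ?thesis using sums_single[of 0 "\<lambda>_. (norm e)\<^sup>2"] by simp
qed

lemma dseq_l2: "dseq e \<in> l2_seqs"
  using dseq_sums[of e] by (auto simp: l2_seqs_def sums_summable)

lemma dseq_sum: "(\<Sum>n. (norm (dseq e n))\<^sup>2) = (norm e)\<^sup>2"
  using dseq_sums[of e] by (simp add: sums_unique[symmetric])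

lemma dseq_zero: "dseq 0 = (\<lambda>n. 0)" by (simp add: dseq_def fun_eq_iff)

lemma hardy0: "hardy_fun a 0 = a 0"
proof -
  have "(\<lambda>n. ((0::complex) ^ n) *\<^sub>C a n) = (\<lambda>n. if n = 0 then a n else 0)"
    by (auto simp: fun_eq_iff scaleC_one power_0_left)
  then show ?thesis unfolding hardy_fun_def using sums_single[of 0 a] sums_unique by metis
qed

lemma phi1_0: "bcl_phi1 P U 0 v = cadjoint U (v - P v)"
  by (simp add: bcl_phi1_def)
lemma phi2_0: "bcl_phi2 P U 0 v = P (U v)"
  by (simp add: bcl_phi2_def)

locale bclm =
  fixes V1 V2 :: "'h::complex_hilbert \<Rightarrow> 'h" and P U :: "'e::complex_hilbert \<Rightarrow> 'e"
    and Hp Hu :: "'h set" and W :: "'h \<Rightarrow> nat \<Rightarrow> 'e"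
  assumes iso1: "isometry V1" and iso2: "isometry V2"
    and proj: "projection P" and unit: "unitary U"
    and Hp: "closed_csubspace Hp" and Hu: "closed_csubspace Hu"
    and orth: "\<forall>x\<in>Hp. \<forall>y\<in>Hu. cinner x y = 0"
    and decomp: "\<forall>h. \<exists>x\<in>Hp. \<exists>y\<in>Hu. h = x + y"
    and r1p: "reduces Hp V1" and r2p: "reduces Hp V2" and r1u: "reduces Hu V1" and r2u: "reduces Hu V2"
    and Wbij: "bij_betw W Hp l2_seqs"
    and Wadd: "\<forall>x\<in>Hp. \<forall>y\<in>Hp. W (x + y) = (\<lambda>n. W x n + W y n)"
    and Wsc: "\<forall>c. \<forall>x\<in>Hp. W (c *\<^sub>C x) = (\<lambda>n. c *\<^sub>C W x n)"
    and Wnorm: "\<forall>x\<in>Hp. (\<Sum>n. (norm (W x n))\<^sup>2) = (norm x)\<^sup>2"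
    and Whardy: "\<forall>x\<in>Hp. \<forall>z. norm z < 1 \<longrightarrow>
            hardy_fun (W (V1 x)) z = bcl_phi1 P U z (hardy_fun (W x) z)
          \<and> hardy_fun (W (V2 x)) z = bcl_phi2 P U z (hardy_fun (W x) z)"
begin

lemma Hp0: "0 \<in> Hp" and Hpadd: "x \<in> Hp \<Longrightarrow> y \<in> Hp \<Longrightarrow> x + y \<in> Hp"
  and Hpsc: "x \<in> Hp \<Longrightarrow> c *\<^sub>C x \<in> Hp"
  using Hp by (auto simp: closed_csubspace_def csubspace_def)

lemma Hu0: "0 \<in> Hu"
  using Hu by (auto simp: closed_csubspace_def csubspace_def)

lemma orth': "x \<in> Hp \<Longrightarrow> y \<in> Hu \<Longrightarrow> cinner y x = 0"
  using orth by (metis cinner_cnj_commute complex_cnj_zero)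

lemma W0: "W 0 = (\<lambda>n. 0)"
  using Wsc Hp0 by (metis (no_types) scaleC_zero_left)

lemma Wl2: "x \<in> Hp \<Longrightarrow> W x \<in> l2_seqs"
  using Wbij by (auto simp: bij_betw_def)

lemma Wsumm: "x \<in> Hp \<Longrightarrow> summable (\<lambda>n. (norm (W x n))\<^sup>2)"
  using Wl2 by (simp add: l2_seqs_def)

lemma Wonto: "a \<in> l2_seqs \<Longrightarrow> \<exists>x\<in>Hp. W x = a"
  using Wbij by (metis bij_betw_def imageE)

lemma Winj: "x \<in> Hp \<Longrightarrow> y \<in> Hp \<Longrightarrow> W x = W y \<Longrightarrow> x = y"
  using Wbij by (auto simp: bij_betw_def inj_on_def)

lemma Wdelta: "\<exists>x\<in>Hp. W x = dseq e"
  using Wonto dseq_l2 by blast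

lemma V1_0: "x \<in> Hp \<Longrightarrow> W (V1 x) 0 = cadjoint U (W x 0 - P (W x 0))"
  using Whardy by (metis hardy0 phi1_0 norm_zero zero_less_one)
lemma V2_0: "x \<in> Hp \<Longrightarrow> W (V2 x) 0 = P (U (W x 0))"
  using Whardy by (metis hardy0 phi2_0 norm_zero zero_less_one)

lemma inner_delta_re:
  assumes y: "y \<in> Hp" and x: "x \<in> Hp" and Wx: "W x = dseq c"
  shows "Re (cinner y x) = Re (cinner (W y 0) c)"
proof -
  define b where "b = W y"
  define T where "T = (\<Sum>n. (norm (b (Suc n)))\<^sup>2)"
  have yx: "y + x \<in> Hp" using Hpadd y x by blast
  have Wyx: "W (y + x) = (\<lambda>n. b n + dseq c n)" using Wadd y x Wx by (simp add: b_def)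
  have s1: "(norm (y + x))\<^sup>2 = (norm (b 0 + c))\<^sup>2 + T"
  proof -
    have "(norm (y + x))\<^sup>2 = (\<Sum>n. (norm (W (y + x) n))\<^sup>2)" using Wnorm yx by simp
    also have "... = (norm (W (y + x) 0))\<^sup>2 + (\<Sum>n. (norm (W (y + x) (Suc n)))\<^sup>2)"
      using suminf_split_head[OF Wsumm[OF yx]] by simp
    finally show ?thesis by (simp add: Wyx dseq_def T_def)
  qed
  have s2: "(norm y)\<^sup>2 = (norm (b 0))\<^sup>2 + T"
  proof -
    have "(norm y)\<^sup>2 = (\<Sum>n. (norm (W y n))\<^sup>2)" using Wnorm y by simp
    also have "... = (norm (W y 0))\<^sup>2 + (\<Sum>n. (norm (W y (Suc n)))\<^sup>2)"
      using suminf_split_head[OF Wsumm[OF y]] by simp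
    finally show ?thesis by (simp add: b_def T_def)
  qed
  have s3: "(norm x)\<^sup>2 = (norm c)\<^sup>2" using Wnorm x Wx dseq_sum by metis
  show ?thesis using s1 s2 s3 norm_sq_add[of y x] norm_sq_add[of "b 0" c] by (simp add: b_def)
qed

lemma inner_delta:
  assumes y: "y \<in> Hp" and x: "x \<in> Hp" and Wx: "W x = dseq c"
  shows "cinner y x = cinner (W y 0) c"
proof -
  have re: "Re (cinner y x) = Re (cinner (W y 0) c)" by (rule inner_delta_re[OF y x Wx])
  have ix: "\<i> *\<^sub>C x \<in> Hp" using Hpsc x by blast
  have Wix: "W (\<i> *\<^sub>C x) = dseq (\<i> *\<^sub>C c)" using Wsc x Wx by (auto simp: dseq_def fun_eq_iff)
  have "Re (cinner y (\<i> *\<^sub>C x)) = Re (cinner (W y 0) (\<i> *\<^sub>C c))" by (rule inner_delta_re[OF y ix Wix])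
  then have im: "Im (cinner y x) = Im (cinner (W y 0) c)" by (simp add: cinner_scaleC_right)
  show ?thesis using re im by (simp add: complex_eqI)
qed

lemma adj_delta:
  assumes iso: "isometry V" and rp: "reduces Hp V" and ru: "reduces Hu V"
    and F: "\<And>y. y \<in> Hp \<Longrightarrow> W (V y) 0 = F (W y 0)"
    and FG: "\<And>b. cinner (F b) e = cinner b (G e)"
    and x: "x \<in> Hp" and Wx: "W x = dseq e" and x': "x' \<in> Hp" and Wx': "W x' = dseq (G e)"
  shows "cadjoint V x = x'"
proof (rule cinner_ext_right)
  fix y
  have bc: "bounded_clinear V" using iso by (rule isometry_bcl)
  obtain yp yu where yp: "yp \<in> Hp" and yu: "yu \<in> Hu" and y: "y = yp + yu" using decomp by blast
  have Vyp: "V yp \<in> Hp" using rp yp by (auto simp: reduces_def)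
  have Vyu: "V yu \<in> Hu" using ru yu by (auto simp: reduces_def)
  have "cinner y (cadjoint V x) = cinner (V y) x" using cadjoint_prop[OF bc] by simp
  also have "... = cinner (V yp) x + cinner (V yu) x" by (simp add: y bcl_add[OF bc] cinner_add_left)
  also have "cinner (V yu) x = 0" by (rule orth'[OF x Vyu])
  also have "cinner (V yp) x = cinner (W (V yp) 0) e" by (rule inner_delta[OF Vyp x Wx])
  also have "... = cinner (W yp 0) (G e)" by (simp add: F[OF yp] FG)
  also have "... = cinner yp x'" by (rule inner_delta[OF yp x' Wx', symmetric])
  also have "... = cinner y x'" using orth'[OF x' yu] by (simp add: y cinner_add_left)
  finally show "cinner y (cadjoint V x) = cinner y x'" by simp
qed

lemma bc1: "bounded_clinear V1" using iso1 by (rule isometry_bcl)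
lemma bc2: "bounded_clinear V2" using iso2 by (rule isometry_bcl)

lemmas Uf = unitary_facts[OF unit]
lemmas Pf = projection_facts[OF proj]

lemma adj1:
  assumes x: "x \<in> Hp" and Wx: "W x = dseq e" and x': "x' \<in> Hp" and Wx': "W x' = dseq (U e - P (U e))"
  shows "cadjoint V1 x = x'"
proof (rule adj_delta[where F="\<lambda>b. cadjoint U (b - P b)" and G="\<lambda>e. U e - P (U e)", OF iso1 r1p r1u V1_0 _ x Wx x' Wx'])
  fix b
  show "cinner (cadjoint U (b - P b)) e = cinner b (U e - P (U e))"
    by (simp add: Uf(6) cinner_diff_left cinner_diff_right Pf(3))
qed

lemma adj2:
  assumes x: "x \<in> Hp" and Wx: "W x = dseq e" and x': "x' \<in> Hp" and Wx': "W x' = dseq (cadjoint U (P e))"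
  shows "cadjoint V2 x = x'"
proof (rule adj_delta[where F="\<lambda>b. P (U b)" and G="\<lambda>e. cadjoint U (P e)", OF iso2 r2p r2u V2_0 _ x Wx x' Wx'])
  fix b
  show "cinner (P (U b)) e = cinner b (cadjoint U (P e))"
    by (simp add: Uf(5) Pf(3))
qed

lemma norm_PU:
  assumes def0: "\<forall>x. defect V1 V2 x = 0"
  shows "norm (P (U e)) = norm (P e)"
proof -
  define a1 where "a1 = U e - P (U e)"
  define a2 where "a2 = cadjoint U (P e)"
  obtain x where x: "x \<in> Hp" "W x = dseq e" using Wdelta by blast
  obtain x1 where x1: "x1 \<in> Hp" "W x1 = dseq a1" using Wdelta by blast
  obtain x2 where x2: "x2 \<in> Hp" "W x2 = dseq a2" using Wdelta by blast
  have A1: "cadjoint V1 x = x1" using adj1[OF x x1[unfolded a1_def]] .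
  have A2: "cadjoint V2 x = x2" using adj2[OF x x2[unfolded a2_def]] .
  have Pa1: "P a1 = 0" by (simp add: a1_def Pf(6))
  have A3: "cadjoint V2 x1 = 0"
    by (rule adj2[OF x1 Hp0]) (simp add: W0 Pa1 bcl_zero[OF Uf(8)] dseq_zero)
  have "defect V1 V2 x = x - V1 x1 - V2 x2"
    by (simp add: defect_def A1 A2 A3 bcl_zero[OF bc1] bcl_zero[OF bc2])
  then have xe: "x = V1 x1 + V2 x2" using def0 by (metis diff_diff_eq eq_iff_diff_eq_0)
  have "cinner x x = cinner (V1 x1) x + cinner (V2 x2) x" by (subst (1) xe) (simp add: cinner_add_left)
  also have "... = cinner x1 x1 + cinner x2 x2"
    by (simp add: cadjoint_prop[OF bc1] cadjoint_prop[OF bc2] A1 A2)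
  finally have "(norm x)\<^sup>2 = (norm x1)\<^sup>2 + (norm x2)\<^sup>2"
    by (simp only: cinner_norm of_real_add[symmetric] of_real_eq_iff)
  moreover have "(norm x)\<^sup>2 = (norm e)\<^sup>2" using Wnorm x dseq_sum by metis
  moreover have "(norm x1)\<^sup>2 = (norm a1)\<^sup>2" using Wnorm x1 dseq_sum by metis
  moreover have "(norm x2)\<^sup>2 = (norm a2)\<^sup>2" using Wnorm x2 dseq_sum by metis
  moreover have "norm a2 = norm (P e)" by (simp add: a2_def Uf(9))
  moreover have "(norm (U e))\<^sup>2 = (norm (P (U e)))\<^sup>2 + (norm a1)\<^sup>2" unfolding a1_def by (rule Pf(5))
  moreover have "norm (U e) = norm e" by (rule Uf(2))
  ultimately have "(norm (P (U e)))\<^sup>2 = (norm (P e))\<^sup>2" by simp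
  then show ?thesis by (simp add: power2_eq_iff_nonneg)
qed

lemma PU_commute:
  assumes def0: "\<forall>x. defect V1 V2 x = 0"
  shows "P (U e) = U (P e)"
proof -
  have nPU: "\<And>e. norm (P (U e)) = norm (P e)" using norm_PU[OF def0] .
  have cA: "P (U f) = 0" if "P f = 0" for f using nPU[of f] that by simp
  have cB: "P (cadjoint U f) = 0" if "P f = 0" for f using nPU[of "cadjoint U f"] that Uf(4) by simp
  define g where "g = U (P e) - P (U (P e))"
  have Pg: "P g = 0" by (simp add: g_def Pf(6))
  have "cinner g g = cinner (U (P e)) g - cinner (P (U (P e))) g" by (simp add: g_def cinner_diff_left)
  also have "cinner (P (U (P e))) g = 0" by (simp add: Pf(3) Pg)
  also have "cinner (U (P e)) g = 0" by (simp add: Uf(5) Pf(3) cB[OF Pg])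
  finally have "g = 0" by (simp add: cinner_self_zero_iff)
  then have h1: "P (U (P e)) = U (P e)" by (simp add: g_def)
  have h2: "P (U (e - P e)) = 0" by (rule cA) (simp add: Pf(6))
  have "P (U e) = P (U (P e)) + P (U (e - P e))"
    by (simp add: bcl_add[OF Pf(1), symmetric] bcl_add[OF Uf(1), symmetric])
  then show ?thesis using h1 h2 by simp
qed

lemma V2_unitary_P:
  assumes "unitary V2"
  shows "P e = e"
proof -
  have su: "surj V2" using assms by (simp add: unitary_def)
  obtain t where t: "t \<in> Hp" "W t = dseq (e - P e)" using Wdelta by blast
  obtain k where "t = V2 k" using su by (metis surj_def)
  obtain kp ku where kp: "kp \<in> Hp" and ku: "ku \<in> Hu" and k: "k = kp + ku" using decomp by blast
  have V2kp: "V2 kp \<in> Hp" using r2p kp by (auto simp: reduces_def)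
  have V2ku: "V2 ku \<in> Hu" using r2u ku by (auto simp: reduces_def)
  have "t - V2 kp = V2 ku" using \<open>t = V2 k\<close> k bcl_add[OF bc2] by simp
  moreover have "t - V2 kp \<in> Hp" using Hpadd[OF t(1) Hpsc[OF V2kp, of "-1"]] by (simp add: scaleC_minus1)
  ultimately have "cinner (V2 ku) (V2 ku) = 0" using orth V2ku by metis
  then have "V2 ku = 0" by (simp add: cinner_self_zero_iff)
  then have "t = V2 kp" using \<open>t - V2 kp = V2 ku\<close> by simp
  then have "e - P e = P (U (W kp 0))" using V2_0[OF kp] t(2) by (simp add: dseq_def)
  then have "P (e - P e) = e - P e" using Pf(2) by simp
  then show ?thesis using Pf(6) by simp
qed

lemma V1_unitary_P:
  assumes "unitary V1" and def0: "\<forall>x. defect V1 V2 x = 0"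
  shows "P e = 0"
proof -
  have su: "surj V1" using assms by (simp add: unitary_def)
  obtain t where t: "t \<in> Hp" "W t = dseq (P e)" using Wdelta by blast
  obtain k where "t = V1 k" using su by (metis surj_def)
  obtain kp ku where kp: "kp \<in> Hp" and ku: "ku \<in> Hu" and k: "k = kp + ku" using decomp by blast
  have V1kp: "V1 kp \<in> Hp" using r1p kp by (auto simp: reduces_def)
  have V1ku: "V1 ku \<in> Hu" using r1u ku by (auto simp: reduces_def)
  have "t - V1 kp = V1 ku" using \<open>t = V1 k\<close> k bcl_add[OF bc1] by simp
  moreover have "t - V1 kp \<in> Hp" using Hpadd[OF t(1) Hpsc[OF V1kp, of "-1"]] by (simp add: scaleC_minus1)
  ultimately have "cinner (V1 ku) (V1 ku) = 0" using orth V1ku by metis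
  then have "V1 ku = 0" by (simp add: cinner_self_zero_iff)
  then have "t = V1 kp" using \<open>t - V1 kp = V1 ku\<close> by simp
  then have "P e = cadjoint U (W kp 0 - P (W kp 0))" using V1_0[OF kp] t(2) by (simp add: dseq_def)
  then have "U (P e) = W kp 0 - P (W kp 0)" using Uf(4) by simp
  then have "P (U (P e)) = 0" by (simp add: Pf(6))
  moreover have "P (U (P e)) = U (P e)" using PU_commute[OF def0] Pf(2) by metis
  ultimately have "U (P e) = 0" by simp
  then show ?thesis using Uf(3) bcl_zero[OF Uf(8)] by metis
qed

end


primrec ubp_seq :: "(nat \<Rightarrow> 'a::complex_inner) \<Rightarrow> nat \<Rightarrow> 'a" where
  "ubp_seq w 0 = 0"
| "ubp_seq w (Suc k) =
    (let u = complex_of_real ((1/3)^(Suc k) / norm (w (Suc k))) *\<^sub>C w (Suc k) in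
     if (1/3)^(Suc k) * norm (w (Suc k)) \<le> cmod (cinner (ubp_seq w k + u) (w (Suc k)))
     then ubp_seq w k + u else ubp_seq w k - u)"

lemma csub_diff: "csubspace S \<Longrightarrow> x \<in> S \<Longrightarrow> y \<in> S \<Longrightarrow> x - y \<in> S"
  unfolding csubspace_def by (metis diff_conv_add_uminus scaleC_minus1)
lemma csub_add: "csubspace S \<Longrightarrow> x \<in> S \<Longrightarrow> y \<in> S \<Longrightarrow> x + y \<in> S"
  unfolding csubspace_def by blast
lemma csub_sc: "csubspace S \<Longrightarrow> x \<in> S \<Longrightarrow> c *\<^sub>C x \<in> S"
  unfolding csubspace_def by blast
lemma csub_0: "csubspace S \<Longrightarrow> 0 \<in> S"
  unfolding csubspace_def by blast

lemma half_aux: "(a::real) \<le> c \<Longrightarrow> 0 \<le> b \<Longrightarrow> 0 \<le> c \<Longrightarrow> (a - b) / 2 \<le> c"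
  by (simp add: field_simps)

lemma half_aux2: "(x::real) \<le> (a - b) / 2 \<Longrightarrow> 0 \<le> b \<Longrightarrow> x \<le> a / 2"
  by (simp add: field_simps)

lemma ubp_step:
  fixes p w :: "'a::complex_inner" and r :: real
  assumes w: "w \<noteq> 0" and r: "r \<ge> 0"
  defines "u \<equiv> complex_of_real (r / norm w) *\<^sub>C w"
  shows "r * norm w \<le> cmod (cinner (p + u) w) \<or> r * norm w \<le> cmod (cinner (p - u) w)"
    and "norm u = r"
proof -
  have nw: "norm w > 0" using w by simp
  have uw: "cinner u w = complex_of_real (r * norm w)"
    using nw by (simp add: u_def cinner_scaleC_left cinner_norm power2_eq_square)
  have "2 * (r * norm w) = cmod (cinner (p + u) w - cinner (p - u) w)"
    using r nw by (simp add: cinner_add_left cinner_diff_left uw norm_mult abs_mult)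
  also have "... \<le> cmod (cinner (p + u) w) + cmod (cinner (p - u) w)" by (rule norm_triangle_ineq4)
  finally show "r * norm w \<le> cmod (cinner (p + u) w) \<or> r * norm w \<le> cmod (cinner (p - u) w)" by linarith
  show "norm u = r" unfolding u_def norm_scaleC norm_of_real using nw r by simp
qed

lemma ubp_seq_props:
  fixes w :: "nat \<Rightarrow> 'a::complex_inner"
  assumes w: "\<And>k. w k \<noteq> 0"
  shows "norm (ubp_seq w (Suc k) - ubp_seq w k) = (1/3)^(Suc k)"
    and "(1/3)^(Suc k) * norm (w (Suc k)) \<le> cmod (cinner (ubp_seq w (Suc k)) (w (Suc k)))"
proof -
  define u where "u = complex_of_real ((1/3)^(Suc k) / norm (w (Suc k))) *\<^sub>C w (Suc k)"
  note st = ubp_step[OF w[of "Suc k"], of "(1/3)^(Suc k)", folded u_def]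
  have eq: "ubp_seq w (Suc k) = (if (1/3)^(Suc k) * norm (w (Suc k)) \<le> cmod (cinner (ubp_seq w k + u) (w (Suc k)))
     then ubp_seq w k + u else ubp_seq w k - u)"
    unfolding u_def by (simp only: ubp_seq.simps Let_def)
  show "norm (ubp_seq w (Suc k) - ubp_seq w k) = (1/3)^(Suc k)"
    using st(2) unfolding eq by (auto simp: norm_minus_cancel)
  show "(1/3)^(Suc k) * norm (w (Suc k)) \<le> cmod (cinner (ubp_seq w (Suc k)) (w (Suc k)))"
    using st(1)[of "ubp_seq w k"] unfolding eq by auto
qed

lemma ubp_seq_in:
  assumes S: "csubspace S" and wS: "\<And>k. w k \<in> S"
  shows "ubp_seq w k \<in> S"
proof (induction k)
  case 0 then show ?case using csub_0[OF S] by simp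
next
  case (Suc k)
  have "complex_of_real ((1/3)^(Suc k) / norm (w (Suc k))) *\<^sub>C w (Suc k) \<in> S" using csub_sc[OF S wS] .
  then show ?case using Suc csub_add[OF S] csub_diff[OF S] by (simp add: Let_def)
qed

lemma ubp_seq_dist:
  fixes w :: "nat \<Rightarrow> 'a::complex_inner"
  assumes w: "\<And>k. w k \<noteq> 0" and nm: "n \<le> m"
  shows "norm (ubp_seq w m - ubp_seq w n) \<le> ((1/3)^n - (1/3)^m) / 2"
  using nm
proof (induction m)
  case 0 then show ?case by simp
next
  case (Suc m)
  show ?case
  proof (cases "n = Suc m")
    case True then show ?thesis by simp
  next
    case False
    then have nm: "n \<le> m" using Suc.prems by simp
    have "norm (ubp_seq w (Suc m) - ubp_seq w n)
        \<le> norm (ubp_seq w (Suc m) - ubp_seq w m) + norm (ubp_seq w m - ubp_seq w n)"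
      by (rule order_trans[OF _ norm_triangle_ineq]) simp
    also have "... \<le> (1/3)^(Suc m) + ((1/3)^n - (1/3)^m) / 2"
    proof -
      have st: "norm (ubp_seq w (Suc m) - ubp_seq w m) = (1/3)^(Suc m)" by (rule ubp_seq_props(1)[OF w])
      show ?thesis using st Suc.IH[OF nm] by linarith
    qed
    also have "... = ((1/3)^n - (1/3)^(Suc m)) / 2" by (simp add: field_simps)
    finally show ?thesis .
  qed
qed

lemma ubp:
  fixes v :: "nat \<Rightarrow> 'a::complex_hilbert"
  assumes cl: "closed S" and S: "csubspace S" and vS: "\<And>n. v n \<in> S"
    and pw: "\<And>y. y \<in> S \<Longrightarrow> \<exists>B. \<forall>n. cmod (cinner y (v n)) \<le> B"
  shows "\<exists>M. \<forall>n. norm (v n) \<le> M"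
proof (rule ccontr)
  assume "\<not> (\<exists>M. \<forall>n. norm (v n) \<le> M)"
  then have "\<forall>k::nat. \<exists>n. norm (v n) > 4^k" by (meson not_le)
  then obtain g where g: "\<And>k::nat. norm (v (g k)) > 4^k" by metis
  define w where "w k = v (g k)" for k
  have w0: "\<And>k. w k \<noteq> 0" using g by (metis w_def norm_zero not_less zero_le_power zero_le_numeral)
  have wS: "\<And>k. w k \<in> S" using vS by (simp add: w_def)
  define x where "x = ubp_seq w"
  have xS: "x k \<in> S" for k using ubp_seq_in[OF S wS] by (simp add: x_def)
  have dist: "n \<le> m \<Longrightarrow> norm (x m - x n) \<le> ((1/3)^n - (1/3)^m) / 2" for n m
    using ubp_seq_dist[OF w0] by (simp add: x_def)
  have cauchy: "Cauchy x"
  proof (rule metric_CauchyI)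
    fix e :: real assume e: "0 < e"
    obtain N where N: "(1/3::real)^N < e" using real_arch_pow_inv[OF e, of "1/3"] by auto
    have "dist (x m) (x n) < e" if "m \<ge> N" "n \<ge> N" for m n
    proof -
      have b: "(1/3::real)^k \<le> (1/3)^N" if "k \<ge> N" for k using that by (simp add: power_decreasing)
      have "dist (x m) (x n) \<le> (1/3)^N"
      proof (cases "n \<le> m")
        case True
        then have "norm (x m - x n) \<le> ((1/3)^n - (1/3)^m) / 2" by (rule dist)
        also have "... \<le> (1/3)^N"
        proof -
          have "(0::real) \<le> (1/3)^m" "(0::real) \<le> (1/3)^N" by simp_all
          then show ?thesis using half_aux[OF b[OF \<open>n \<ge> N\<close>]] by blast
        qed
        finally show ?thesis by (simp add: dist_norm)
      next
        case False
        then have "norm (x n - x m) \<le> ((1/3)^m - (1/3)^n) / 2" using dist by simp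
        also have "... \<le> (1/3)^N"
        proof -
          have "(0::real) \<le> (1/3)^n" "(0::real) \<le> (1/3)^N" by simp_all
          then show ?thesis using half_aux[OF b[OF \<open>m \<ge> N\<close>]] by blast
        qed
        finally show ?thesis by (simp add: dist_norm norm_minus_commute)
      qed
      then show ?thesis using N by simp
    qed
    then show "\<exists>N. \<forall>m\<ge>N. \<forall>n\<ge>N. dist (x m) (x n) < e" by blast
  qed
  then obtain y where xy: "x \<longlonglongrightarrow> y" using Cauchy_convergent_iff convergent_def by blast
  have yS: "y \<in> S" using closed_sequentially[OF cl xS xy] .
  have ydist: "norm (y - x n) \<le> (1/3)^n / 2" for n
  proof (rule LIMSEQ_le_const2[of "\<lambda>m. norm (x m - x n)"])
    show "(\<lambda>m. norm (x m - x n)) \<longlonglongrightarrow> norm (y - x n)" by (intro tendsto_intros xy)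
    show "\<exists>N. \<forall>m\<ge>N. norm (x m - x n) \<le> (1/3)^n / 2"
    proof (intro exI[of _ n] allI impI)
      fix m assume "n \<le> m"
      then have "norm (x m - x n) \<le> ((1/3)^n - (1/3)^m) / 2" by (rule dist)
      moreover have "(0::real) \<le> (1/3)^m" "(0::real) \<le> (1/3)^n" by simp_all
      ultimately show "norm (x m - x n) \<le> (1/3)^n / 2" using half_aux2 by blast
    qed
  qed
  obtain B where B: "\<And>n. cmod (cinner y (v n)) \<le> B" using pw[OF yS] by blast
  have low: "(4/3)^(Suc k) / 2 < cmod (cinner y (w (Suc k)))" for k
  proof -
    have a: "(1/3)^(Suc k) * norm (w (Suc k)) \<le> cmod (cinner (x (Suc k)) (w (Suc k)))"
      using ubp_seq_props(2)[OF w0] by (simp add: x_def)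
    have "cmod (cinner (y - x (Suc k)) (w (Suc k))) \<le> norm (y - x (Suc k)) * norm (w (Suc k))"
      by (rule cauchy_schwarz)
    also have "... \<le> (1/3)^(Suc k) / 2 * norm (w (Suc k))"
      by (rule mult_right_mono[OF ydist norm_ge_zero])
    finally have bb: "cmod (cinner (y - x (Suc k)) (w (Suc k))) \<le> (1/3)^(Suc k) / 2 * norm (w (Suc k))" .
    have "cinner y (w (Suc k)) = cinner (x (Suc k)) (w (Suc k)) + cinner (y - x (Suc k)) (w (Suc k))"
      by (simp add: cinner_diff_left)
    then have "cmod (cinner (x (Suc k)) (w (Suc k))) \<le> cmod (cinner y (w (Suc k))) + cmod (cinner (y - x (Suc k)) (w (Suc k)))"
      by (metis add_diff_cancel_right' norm_triangle_ineq4)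
    then have c: "(1/3)^(Suc k) / 2 * norm (w (Suc k)) \<le> cmod (cinner y (w (Suc k)))"
      using a bb by simp
    have "(4/3::real)^(Suc k) / 2 = (1/3)^(Suc k) / 2 * 4^(Suc k)" by (simp add: power_divide)
    also have "... < (1/3)^(Suc k) / 2 * norm (w (Suc k))"
      using g[of "Suc k"] by (simp add: w_def)
    finally show ?thesis using c by simp
  qed
  obtain k where k: "2 * B < (4/3::real)^k" using real_arch_pow[of "4/3" "2 * B"] by auto
  have p0: "0 \<le> (4/3::real)^k" by simp
  have "B < (4/3::real)^k / 2" using k by (simp add: field_simps)
  also have "... \<le> (4/3)^(Suc k) / 2" using p0 by (simp add: field_simps)
  also have "... < cmod (cinner y (w (Suc k)))" by (rule low)
  finally have "B < cmod (cinner y (w (Suc k)))" .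
  then show False using B[of "g (Suc k)"] by (simp add: w_def)
qed


locale uq =
  fixes U Q :: "'e::complex_hilbert \<Rightarrow> 'e"
  assumes unit: "unitary U" and bcQ: "bounded_clinear Q" and idem: "\<And>x. Q (Q x) = Q x"
    and QU: "\<And>x. Q (U x) = U (Q x)"
begin

lemmas Uf = unitary_facts[OF unit]

lemma QUa: "Q (cadjoint U x) = cadjoint U (Q x)"
proof -
  have "cadjoint U (Q x) = cadjoint U (Q (U (cadjoint U x)))" by (simp add: Uf(4))
  also have "... = Q (cadjoint U x)" by (simp add: QU Uf(3))
  finally show ?thesis by simp
qed

lemma S_iff: "x \<in> range Q \<longleftrightarrow> Q x = x"
  using idem by (metis rangeE rangeI)

lemma S_csub: "csubspace (range Q)"
  unfolding csubspace_def
proof (intro conjI ballI allI)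
  show "0 \<in> range Q" using bcl_zero[OF bcQ] by (simp only: S_iff)
  show "x + y \<in> range Q" if "x \<in> range Q" "y \<in> range Q" for x y
  proof -
    have "Q x = x" "Q y = y" using that by (simp_all only: S_iff)
    then have "Q (x + y) = x + y" by (simp add: bcl_add[OF bcQ])
    then show ?thesis by (simp only: S_iff)
  qed
  show "c *\<^sub>C x \<in> range Q" if "x \<in> range Q" for c x
  proof -
    have "Q x = x" using that by (simp_all only: S_iff)
    then have "Q (c *\<^sub>C x) = c *\<^sub>C x" by (simp add: bcl_scaleC[OF bcQ])
    then show ?thesis by (simp only: S_iff)
  qed
qed

lemma S_closed: "closed (range Q)"
proof -
  have "range Q = {x. Q x = id x}" using S_iff by auto
  moreover have "closed {x. Q x = id x}"
    by (rule closed_Collect_eq) (auto intro: linear_continuous_on bcl_bounded_linear[OF bcQ] continuous_on_id)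
  ultimately show ?thesis by simp
qed

lemma US: "x \<in> range Q \<Longrightarrow> U x \<in> range Q"
  by (simp add: S_iff QU)
lemma UaS: "x \<in> range Q \<Longrightarrow> cadjoint U x \<in> range Q"
  by (simp add: S_iff QUa)

lemma N_diff: "U (x - y) - l *\<^sub>C (x - y) = (U x - l *\<^sub>C x) - (U y - l *\<^sub>C y)"
  by (simp add: bcl_diff[OF Uf(1)] scaleC_diff_right)

lemma not_spec:
  assumes surj: "\<forall>y\<in>range Q. \<exists>x\<in>range Q. U x - l *\<^sub>C x = y"
    and c: "c > 0" and below: "\<forall>x\<in>range Q. c * norm x \<le> norm (U x - l *\<^sub>C x)"
  shows "l \<notin> spectrum_on (range Q) U"
proof -
  define R where "R y = (SOME x. x \<in> range Q \<and> U x - l *\<^sub>C x = y)" for y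
  have R: "R y \<in> range Q \<and> U (R y) - l *\<^sub>C R y = y" if "y \<in> range Q" for y
    unfolding R_def by (rule someI_ex) (use surj that in blast)
  have inj: "x = x'" if "x \<in> range Q" "x' \<in> range Q" "U x - l *\<^sub>C x = U x' - l *\<^sub>C x'" for x x'
  proof -
    have "x - x' \<in> range Q" using csub_diff[OF S_csub] that by blast
    then have "c * norm (x - x') \<le> norm (U (x - x') - l *\<^sub>C (x - x'))" using below by blast
    also have "... = 0" using that(3) by (simp add: N_diff)
    finally show ?thesis using c by (simp add: mult_le_0_iff)
  qed
  have NS: "U x - l *\<^sub>C x \<in> range Q" if "x \<in> range Q" for x
    using csub_diff[OF S_csub US[OF that] csub_sc[OF S_csub that]] .
  have "\<exists>R. (\<forall>x\<in>range Q. R x \<in> range Q)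
        \<and> (\<forall>x\<in>range Q. R (U x - l *\<^sub>C x) = x \<and> U (R x) - l *\<^sub>C R x = x)
        \<and> (\<exists>K. \<forall>x\<in>range Q. norm (R x) \<le> K * norm x)"
  proof (intro exI[of _ R] conjI ballI)
    show "R x \<in> range Q" if "x \<in> range Q" for x using R[OF that] by blast
    show "R (U x - l *\<^sub>C x) = x" if "x \<in> range Q" for x
      using R[OF NS[OF that]] inj that by blast
    show "U (R x) - l *\<^sub>C R x = x" if "x \<in> range Q" for x using R[OF that] by blast
    show "\<exists>K. \<forall>x\<in>range Q. norm (R x) \<le> K * norm x"
    proof (intro exI[of _ "1/c"] ballI)
      fix x assume x: "x \<in> range Q"
      have "c * norm (R x) \<le> norm (U (R x) - l *\<^sub>C R x)" using below R[OF x] by blast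
      then have "c * norm (R x) \<le> norm x" using R[OF x] by simp
      then show "norm (R x) \<le> 1 / c * norm x" using c by (simp add: field_simps)
    qed
  qed
  then show ?thesis unfolding spectrum_on_def by blast
qed

lemma circle:
  assumes "l \<in> spectrum_on (range Q) U"
  shows "cmod l = 1"
proof (rule ccontr)
  assume l1: "cmod l \<noteq> 1"
  define c where "c = \<bar>1 - cmod l\<bar>"
  have c: "c > 0" using l1 by (simp add: c_def)
  have below: "\<forall>x\<in>range Q. c * norm x \<le> norm (U x - l *\<^sub>C x)"
  proof
    fix x
    have "\<bar>norm (U x) - norm (l *\<^sub>C x)\<bar> \<le> norm (U x - l *\<^sub>C x)" by (rule norm_triangle_ineq3)
    moreover have "\<bar>norm (U x) - norm (l *\<^sub>C x)\<bar> = c * norm x"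
    proof -
      have "norm (U x) - norm (l *\<^sub>C x) = (1 - cmod l) * norm x"
        by (simp add: Uf(2) norm_scaleC algebra_simps)
      then show ?thesis by (simp add: c_def abs_mult)
    qed
    ultimately show "c * norm x \<le> norm (U x - l *\<^sub>C x)" by simp
  qed
  have cpl: "complete (range Q)" using S_closed complete_eq_closed by blast
  have ne: "range Q \<noteq> {}" by blast
  have surj: "\<forall>y\<in>range Q. \<exists>x\<in>range Q. U x - l *\<^sub>C x = y"
  proof
    fix y assume y: "y \<in> range Q"
    show "\<exists>x\<in>range Q. U x - l *\<^sub>C x = y"
    proof (cases "cmod l < 1")
      case True
      define f where "f x = cadjoint U (y + l *\<^sub>C x)" for x
      have fS: "f ` range Q \<subseteq> range Q"
      proof (rule image_subsetI)
        fix x assume x: "x \<in> range Q"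
        have "y + l *\<^sub>C x \<in> range Q" by (rule csub_add[OF S_csub y csub_sc[OF S_csub x]])
        then show "f x \<in> range Q" unfolding f_def by (rule UaS)
      qed
      have lip: "dist (f x) (f x') \<le> cmod l * dist x x'" for x x'
      proof -
        have e1: "(y + l *\<^sub>C x) - (y + l *\<^sub>C x') = l *\<^sub>C (x - x')" by (simp add: scaleC_diff_right)
        have "f x - f x' = cadjoint U ((y + l *\<^sub>C x) - (y + l *\<^sub>C x'))"
          unfolding f_def by (rule bcl_diff[OF Uf(8), symmetric])
        then have "f x - f x' = cadjoint U (l *\<^sub>C (x - x'))" by (simp only: e1)
        then show ?thesis by (simp add: dist_norm Uf(9) norm_scaleC)
      qed
      have "\<exists>!x\<in>range Q. f x = x"
        by (rule Banach_fix[OF cpl ne _ True fS]) (simp_all add: lip)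
      then obtain x where x: "x \<in> range Q" "f x = x" by blast
      have "U (f x) = U x" using x(2) by simp
      then have "U x = y + l *\<^sub>C x" unfolding f_def Uf(4) by simp
      then show ?thesis using x(1) by (intro bexI[of _ x]) simp_all
    next
      case False
      then have lg: "cmod l > 1" using l1 by simp
      then have l0: "l \<noteq> 0" by auto
      define f where "f x = (1 / l) *\<^sub>C (U x - y)" for x
      have fS: "f ` range Q \<subseteq> range Q"
      proof (rule image_subsetI)
        fix x assume x: "x \<in> range Q"
        have "U x - y \<in> range Q" by (rule csub_diff[OF S_csub US[OF x] y])
        then show "f x \<in> range Q" unfolding f_def by (rule csub_sc[OF S_csub])
      qed
      have lip: "dist (f x) (f x') \<le> (1 / cmod l) * dist x x'" for x x'
      proof -
        have e1: "(U x - y) - (U x' - y) = U (x - x')" by (simp add: bcl_diff[OF Uf(1)])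
        have "f x - f x' = (1 / l) *\<^sub>C ((U x - y) - (U x' - y))"
          unfolding f_def by (rule scaleC_diff_right[symmetric])
        then have "f x - f x' = (1 / l) *\<^sub>C U (x - x')" by (simp only: e1)
        then show ?thesis by (simp add: dist_norm Uf(2) norm_scaleC norm_divide)
      qed
      have c1: "1 / cmod l < 1" using lg by (simp add: divide_less_eq)
      have "\<exists>!x\<in>range Q. f x = x"
      proof (rule Banach_fix[OF cpl ne _ c1 fS])
        show "0 \<le> 1 / cmod l" by simp
        show "\<And>x y. x \<in> range Q \<Longrightarrow> y \<in> range Q \<Longrightarrow> dist (f x) (f y) \<le> 1 / cmod l * dist x y"
          using lip by blast
      qed
      then obtain x where x: "x \<in> range Q" "f x = x" by blast
      have "l *\<^sub>C f x = (l * (1 / l)) *\<^sub>C (U x - y)" by (simp only: f_def scaleC_scaleC)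
      then have "l *\<^sub>C f x = U x - y" using l0 by (simp add: scaleC_one)
      then have h: "U x - y = l *\<^sub>C x" using x(2) by simp
      have "U x - l *\<^sub>C x = y" by (simp add: h[symmetric])
      then show ?thesis using x(1) by blast
    qed
  qed
  show False using not_spec[OF surj c below] assms by blast
qed

lemma cnj_l: "cmod l = 1 \<Longrightarrow> cnj l * l = 1"
  using complex_norm_square[of l] by (simp add: mult.commute)

lemma eig_zero:
  assumes l: "cmod l = 1" and surj: "\<forall>y\<in>range Q. \<exists>x\<in>range Q. U x - l *\<^sub>C x = y"
    and x: "x \<in> range Q" and ev: "U x = l *\<^sub>C x"
  shows "x = 0"
proof -
  have Uax: "cadjoint U x = cnj l *\<^sub>C x"
  proof -
    have "cadjoint U (U x) = x" by (rule Uf(3))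
    then have "x = l *\<^sub>C cadjoint U x" by (simp add: ev bcl_scaleC[OF Uf(8)])
    then have "cnj l *\<^sub>C x = (cnj l * l) *\<^sub>C cadjoint U x" by (metis scaleC_scaleC)
    then show ?thesis using cnj_l[OF l] by (simp add: scaleC_one)
  qed
  obtain w where w: "w \<in> range Q" "U w - l *\<^sub>C w = x" using surj x by blast
  have "cinner x x = cinner (U w - l *\<^sub>C w) x" using w by simp
  also have "... = cinner w (cadjoint U x) - l * cinner w x"
    by (simp add: cinner_diff_left cinner_scaleC_left Uf(5))
  also have "... = 0" by (simp add: Uax cinner_scaleC_right)
  finally show ?thesis by (simp add: cinner_self_zero_iff)
qed

lemma key:
  assumes sp: "l \<in> spectrum_on (range Q) U"
  shows "\<exists>k\<in>range Q. \<forall>w\<in>range Q. U w - l *\<^sub>C w \<noteq> k"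
proof (rule ccontr)
  assume "\<not> ?thesis"
  then have surj: "\<forall>y\<in>range Q. \<exists>x\<in>range Q. U x - l *\<^sub>C x = y" by metis
  have l: "cmod l = 1" using circle[OF sp] .
  have nb: "\<exists>x\<in>range Q. norm (U x - l *\<^sub>C x) < c * norm x" if c: "c > 0" for c
  proof (rule ccontr)
    assume "\<not> ?thesis"
    then have "\<forall>x\<in>range Q. c * norm x \<le> norm (U x - l *\<^sub>C x)" by (meson not_le)
    then show False using not_spec[OF surj c] sp by blast
  qed
  have "\<forall>n::nat. \<exists>x\<in>range Q. norm (U x - l *\<^sub>C x) < (1 / (real n + 1)) * norm x"
    by (intro allI nb) simp
  then obtain xs where xsS: "\<And>n. xs n \<in> range Q"
    and xsb: "\<And>n. norm (U (xs n) - l *\<^sub>C xs n) < (1 / (real n + 1)) * norm (xs n)"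
    by metis
  define d where "d n = norm (U (xs n) - l *\<^sub>C xs n)" for n
  have dpos: "d n > 0" for n
  proof -
    have "U (xs n) - l *\<^sub>C xs n \<noteq> 0"
    proof
      assume "U (xs n) - l *\<^sub>C xs n = 0"
      then have "xs n = 0" using eig_zero[OF l surj xsS] by simp
      then show False using xsb[of n] by simp
    qed
    then show ?thesis by (simp add: d_def)
  qed
  define v where "v n = complex_of_real (1 / d n) *\<^sub>C xs n" for n
  have vS: "v n \<in> range Q" for n unfolding v_def using csub_sc[OF S_csub xsS] .
  have vnorm: "norm (v n) > real n + 1" for n
  proof -
    have "d n < (1 / (real n + 1)) * norm (xs n)" using xsb by (simp add: d_def)
    then have "(real n + 1) * d n < norm (xs n)" by (simp add: field_simps)
    then have "real n + 1 < norm (xs n) / d n" using dpos[of n] by (simp add: field_simps)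
    moreover have "norm (v n) = norm (xs n) / d n" using dpos[of n] by (simp add: v_def norm_scaleC norm_divide)
    ultimately show ?thesis by simp
  qed
  have adjN: "norm (cadjoint U x - cnj l *\<^sub>C x) = norm (U x - l *\<^sub>C x)" for x
  proof -
    have "norm (cadjoint U x - cnj l *\<^sub>C x) = norm (U (cadjoint U x - cnj l *\<^sub>C x))" by (simp add: Uf(2))
    also have "U (cadjoint U x - cnj l *\<^sub>C x) = x - cnj l *\<^sub>C U x"
      by (simp add: bcl_diff[OF Uf(1)] bcl_scaleC[OF Uf(1)] Uf(4))
    also have "x - cnj l *\<^sub>C U x = cnj l *\<^sub>C (l *\<^sub>C x - U x)"
      using cnj_l[OF l] by (simp add: scaleC_diff_right scaleC_scaleC scaleC_one)
    also have "norm ... = norm (U x - l *\<^sub>C x)" using l by (simp add: norm_scaleC norm_minus_commute)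
    finally show ?thesis .
  qed
  have pw: "\<exists>B. \<forall>n. cmod (cinner y (v n)) \<le> B" if y: "y \<in> range Q" for y
  proof -
    obtain w where w: "w \<in> range Q" "U w - l *\<^sub>C w = y" using surj y by blast
    have "cmod (cinner y (v n)) \<le> norm w" for n
    proof -
      have "cinner y (v n) = complex_of_real (1 / d n) * cinner (U w - l *\<^sub>C w) (xs n)"
        using w by (simp add: v_def cinner_scaleC_right)
      also have "cinner (U w - l *\<^sub>C w) (xs n) = cinner w (cadjoint U (xs n) - cnj l *\<^sub>C xs n)"
        by (simp add: cinner_diff_left cinner_diff_right cinner_scaleC_left cinner_scaleC_right Uf(5))
      finally have "cmod (cinner y (v n)) = (1 / d n) * cmod (cinner w (cadjoint U (xs n) - cnj l *\<^sub>C xs n))"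
        using dpos[of n] by (simp add: norm_mult norm_divide)
      also have "... \<le> (1 / d n) * (norm w * d n)"
      proof (rule mult_left_mono)
        have "cmod (cinner w (cadjoint U (xs n) - cnj l *\<^sub>C xs n)) \<le> norm w * norm (cadjoint U (xs n) - cnj l *\<^sub>C xs n)"
          by (rule cauchy_schwarz)
        then show "cmod (cinner w (cadjoint U (xs n) - cnj l *\<^sub>C xs n)) \<le> norm w * d n"
          using adjN[of "xs n"] by (simp add: d_def)
        show "0 \<le> 1 / d n" using dpos[of n] by simp
      qed
      also have "... = norm w" using dpos[of n] by simp
      finally show ?thesis .
    qed
    then show ?thesis by blast
  qed
  obtain M where M: "\<And>n. norm (v n) \<le> M" using ubp[OF S_closed S_csub vS pw] by blast
  obtain n :: nat where "M < real n" using reals_Archimedean2 by blast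
  then show False using M[of n] vnorm[of n] by simp
qed

end


context uq begin

definition good :: "('e \<Rightarrow> 'e) \<Rightarrow> bool" where
  "good X \<longleftrightarrow> (\<forall>s\<in>range Q. X s \<in> range Q)
     \<and> (\<forall>s\<in>range Q. \<forall>t\<in>range Q. X (s + t) = X s + X t)
     \<and> (\<forall>c. \<forall>s\<in>range Q. X (c *\<^sub>C s) = c *\<^sub>C X s)
     \<and> (\<forall>s\<in>range Q. X (U s) = U (X s))
     \<and> (\<forall>s\<in>range Q. X (cadjoint U s) = cadjoint U (X s))"

lemma goodD:
  assumes "good X" "s \<in> range Q"
  shows "X s \<in> range Q" "t \<in> range Q \<Longrightarrow> X (s + t) = X s + X t" "X (c *\<^sub>C s) = c *\<^sub>C X s"
    "X (U s) = U (X s)" "X (cadjoint U s) = cadjoint U (X s)"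
  using assms unfolding good_def by blast+

lemma good_diff:
  assumes "good X" "s \<in> range Q" "t \<in> range Q"
  shows "X (s - t) = X s - X t"
proof -
  have "(-1::complex) *\<^sub>C t \<in> range Q" using csub_sc[OF S_csub assms(3)] .
  then have "X (s + (-1::complex) *\<^sub>C t) = X s + (-1::complex) *\<^sub>C X t"
    using goodD[OF assms(1,2)] goodD(3)[OF assms(1,3)] by simp
  then show ?thesis by (simp add: scaleC_minus1)
qed

lemma good_id: "good (\<lambda>x. c *\<^sub>C x)"
  unfolding good_def
  by (simp add: csub_sc[OF S_csub] scaleC_add_right scaleC_scaleC mult.commute
        bcl_scaleC[OF Uf(1)] bcl_scaleC[OF Uf(8)])

lemma good_U: "good (\<lambda>x. c *\<^sub>C U x)"
  unfolding good_def
  by (simp add: csub_sc[OF S_csub] US scaleC_add_right scaleC_scaleC mult.commute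
        bcl_scaleC[OF Uf(1)] bcl_add[OF Uf(1)] bcl_scaleC[OF Uf(8)] Uf(3) Uf(4))

lemma good_Ua: "good (\<lambda>x. c *\<^sub>C cadjoint U x)"
  unfolding good_def
  by (simp add: csub_sc[OF S_csub] UaS scaleC_add_right scaleC_scaleC mult.commute
        bcl_scaleC[OF Uf(8)] bcl_add[OF Uf(8)] bcl_scaleC[OF Uf(1)] Uf(3) Uf(4))

lemma good_comp:
  assumes "good X" "good Y"
  shows "good (\<lambda>x. X (Y x))"
  unfolding good_def
proof (intro conjI ballI allI)
  fix s assume s: "s \<in> range Q"
  note Ys = goodD[OF assms(2) s]
  show "X (Y s) \<in> range Q" using goodD(1)[OF assms(1) Ys(1)] .
  show "X (Y (s + t)) = X (Y s) + X (Y t)" if t: "t \<in> range Q" for t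
    using Ys(2)[OF t] goodD(2)[OF assms(1) Ys(1) goodD(1)[OF assms(2) t]] by simp
  show "X (Y (c *\<^sub>C s)) = c *\<^sub>C X (Y s)" for c using Ys(3) goodD(3)[OF assms(1) Ys(1)] by simp
  show "X (Y (U s)) = U (X (Y s))" using Ys(4) goodD(4)[OF assms(1) Ys(1)] by simp
  show "X (Y (cadjoint U s)) = cadjoint U (X (Y s))" using Ys(5) goodD(5)[OF assms(1) Ys(1)] by simp
qed

lemma good_R:
  assumes "l \<notin> spectrum_on (range Q) U"
  shows "\<exists>R. good R \<and> (\<forall>s\<in>range Q. R (U s - l *\<^sub>C s) = s)"
proof -
  obtain R where RS: "\<forall>x\<in>range Q. R x \<in> range Q"
    and Rinv: "\<forall>x\<in>range Q. R (U x - l *\<^sub>C x) = x \<and> U (R x) - l *\<^sub>C R x = x"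
    using assms unfolding spectrum_on_def by blast
  define N where "N x = U x - l *\<^sub>C x" for x
  have NS: "N x \<in> range Q" if "x \<in> range Q" for x
    unfolding N_def using csub_diff[OF S_csub US[OF that] csub_sc[OF S_csub that]] .
  have RN: "R (N x) = x" if "x \<in> range Q" for x using Rinv that unfolding N_def by blast
  have NR: "N (R x) = x" if "x \<in> range Q" for x using Rinv that unfolding N_def by blast
  have Nadd: "N (x + y) = N x + N y" for x y
    by (simp add: N_def bcl_add[OF Uf(1)] scaleC_add_right)
  have Nsc: "N (c *\<^sub>C x) = c *\<^sub>C N x" for c x
    by (simp add: N_def bcl_scaleC[OF Uf(1)] scaleC_diff_right scaleC_scaleC mult.commute)
  have NU: "N (U x) = U (N x)" for x
    by (simp add: N_def bcl_diff[OF Uf(1)] bcl_scaleC[OF Uf(1)])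
  have NUa: "N (cadjoint U x) = cadjoint U (N x)" for x
    by (simp add: N_def bcl_diff[OF Uf(8)] bcl_scaleC[OF Uf(8)] Uf(3) Uf(4))
  have "good R"
    unfolding good_def
  proof (intro conjI ballI allI)
    fix s assume s: "s \<in> range Q"
    have Rs: "R s \<in> range Q" using RS s by blast
    show "R s \<in> range Q" by (rule Rs)
    show "R (s + t) = R s + R t" if t: "t \<in> range Q" for t
    proof -
      have Rt: "R t \<in> range Q" using RS t by blast
      have "R (s + t) = R (N (R s) + N (R t))" using NR s t by simp
      also have "... = R (N (R s + R t))" by (simp add: Nadd)
      also have "... = R s + R t" using RN csub_add[OF S_csub Rs Rt] by blast
      finally show ?thesis .
    qed
    show "R (c *\<^sub>C s) = c *\<^sub>C R s" for c
    proof -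
      have "R (c *\<^sub>C s) = R (c *\<^sub>C N (R s))" using NR s by simp
      also have "... = R (N (c *\<^sub>C R s))" by (simp add: Nsc)
      also have "... = c *\<^sub>C R s" using RN csub_sc[OF S_csub Rs] by blast
      finally show ?thesis .
    qed
    show "R (U s) = U (R s)"
    proof -
      have "R (U s) = R (U (N (R s)))" using NR s by simp
      also have "... = R (N (U (R s)))" by (simp add: NU)
      also have "... = U (R s)" using RN US[OF Rs] by blast
      finally show ?thesis .
    qed
    show "R (cadjoint U s) = cadjoint U (R s)"
    proof -
      have "R (cadjoint U s) = R (cadjoint U (N (R s)))" using NR s by simp
      also have "... = R (N (cadjoint U (R s)))" by (simp add: NUa)
      also have "... = cadjoint U (R s)" using RN UaS[OF Rs] by blast
      finally show ?thesis .
    qed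
  qed
  then show ?thesis using RN by (auto simp: N_def)
qed

lemma good_zero: "good (\<lambda>x. 0)"
  using good_id[of 0] by simp

end


lemma comb4: "a *\<^sub>C p - b *\<^sub>C q + d *\<^sub>C q - a *\<^sub>C (p::'a::complex_inner) = (d - b) *\<^sub>C q"
  by (simp add: scaleC_diff_left)

context uq begin

lemma comp_bezout:
  assumes ab: "\<alpha> \<noteq> 0 \<or> \<beta> \<noteq> 0"
    and notin: "\<And>l. l \<in> spectrum_on (range Q) U \<Longrightarrow> (z1, z2) \<noteq> (\<alpha> * cnj l, \<beta> * l)"
  shows "\<exists>X Y. good X \<and> good Y \<and>
    (\<forall>s\<in>range Q. X (\<alpha> *\<^sub>C cadjoint U s - z1 *\<^sub>C s) + Y (\<beta> *\<^sub>C U s - z2 *\<^sub>C s) = s)"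
proof (cases "\<beta> = 0")
  case False
  define l where "l = z2 / \<beta>"
  have z2: "z2 = \<beta> * l" using False by (simp add: l_def)
  show ?thesis
  proof (cases "l \<in> spectrum_on (range Q) U")
    case False
    obtain R where R: "good R" "\<forall>s\<in>range Q. R (U s - l *\<^sub>C s) = s" using good_R[OF False] by blast
    have gY: "good (\<lambda>x. (1 / \<beta>) *\<^sub>C R x)" using good_comp[OF good_id R(1)] .
    show ?thesis
    proof (intro exI conjI ballI)
      show "good (\<lambda>x. 0)" by (rule good_zero)
      show "good (\<lambda>x. (1 / \<beta>) *\<^sub>C R x)" by (rule gY)
      fix s assume s: "s \<in> range Q"
      have t: "U s - l *\<^sub>C s \<in> range Q" using csub_diff[OF S_csub US[OF s] csub_sc[OF S_csub s]] .
      have e: "\<beta> *\<^sub>C U s - z2 *\<^sub>C s = \<beta> *\<^sub>C (U s - l *\<^sub>C s)"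
        by (simp add: z2 scaleC_diff_right scaleC_scaleC)
      have "R (\<beta> *\<^sub>C (U s - l *\<^sub>C s)) = \<beta> *\<^sub>C s" using goodD(3)[OF R(1) t] R(2) s by simp
      then show "0 + (1 / \<beta>) *\<^sub>C R (\<beta> *\<^sub>C U s - z2 *\<^sub>C s) = s"
        using \<open>\<beta> \<noteq> 0\<close> by (simp add: e scaleC_scaleC scaleC_one)
    qed
  next
    case True
    have l1: "cmod l = 1" using circle[OF True] .
    have l0: "l \<noteq> 0" using l1 by auto
    have cl: "cnj l * l = 1" using cnj_l[OF l1] .
    have z1: "z1 \<noteq> \<alpha> * cnj l" using notin[OF True] z2 by simp
    define c where "c = \<alpha> * cnj l - z1"
    have c0: "c \<noteq> 0" using z1 by (simp add: c_def)
    have z20: "z2 \<noteq> 0" using z2 l0 \<open>\<beta> \<noteq> 0\<close> by simp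
    show ?thesis
    proof (intro exI conjI ballI)
      show "good (\<lambda>x. (1 / c) *\<^sub>C x)" by (rule good_id)
      show "good (\<lambda>x. (\<alpha> / (z2 * c)) *\<^sub>C cadjoint U x)" by (rule good_Ua)
      fix s assume s: "s \<in> range Q"
      have "cadjoint U (\<beta> *\<^sub>C U s - z2 *\<^sub>C s) = \<beta> *\<^sub>C s - z2 *\<^sub>C cadjoint U s"
        by (simp add: bcl_diff[OF Uf(8)] bcl_scaleC[OF Uf(8)] Uf(3))
      then have "(1 / c) *\<^sub>C (\<alpha> *\<^sub>C cadjoint U s - z1 *\<^sub>C s) + (\<alpha> / (z2 * c)) *\<^sub>C cadjoint U (\<beta> *\<^sub>C U s - z2 *\<^sub>C s)
         = ((1 / c) * \<alpha>) *\<^sub>C cadjoint U s - ((1 / c) * z1) *\<^sub>C s + ((\<alpha> / (z2 * c)) * \<beta>) *\<^sub>C s - ((\<alpha> / (z2 * c)) * z2) *\<^sub>C cadjoint U s"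
        by (simp only: scaleC_diff_right scaleC_scaleC add_diff_eq)
      also have "(\<alpha> / (z2 * c)) * z2 = (1 / c) * \<alpha>" using z20 by simp
      also have "((1 / c) * \<alpha>) *\<^sub>C cadjoint U s - ((1 / c) * z1) *\<^sub>C s + ((\<alpha> / (z2 * c)) * \<beta>) *\<^sub>C s - ((1 / c) * \<alpha>) *\<^sub>C cadjoint U s
          = ((\<alpha> / (z2 * c)) * \<beta> - (1 / c) * z1) *\<^sub>C s" by (rule comb4)
      also have "(\<alpha> / (z2 * c)) * \<beta> - (1 / c) * z1 = 1"
      proof -
        have "(\<alpha> / (z2 * c)) * \<beta> = \<alpha> / (l * c)" using \<open>\<beta> \<noteq> 0\<close> by (simp add: z2)
        also have "1 / l = cnj l" using cl l0 by (simp add: field_simps)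
        then have "\<alpha> / (l * c) = \<alpha> * cnj l / c" by (metis divide_divide_eq_left times_divide_eq_right mult.right_neutral)
        finally show ?thesis using c0 by (simp add: c_def field_simps)
      qed
      finally show "(1 / c) *\<^sub>C (\<alpha> *\<^sub>C cadjoint U s - z1 *\<^sub>C s) + (\<alpha> / (z2 * c)) *\<^sub>C cadjoint U (\<beta> *\<^sub>C U s - z2 *\<^sub>C s) = s"
        by (simp add: scaleC_one)
    qed
  qed
next
  case True
  then have a0: "\<alpha> \<noteq> 0" using ab by simp
  show ?thesis
  proof (cases "z2 = 0")
    case False
    show ?thesis
    proof (intro exI conjI ballI)
      show "good (\<lambda>x. 0)" by (rule good_zero)
      show "good (\<lambda>x. (- 1 / z2) *\<^sub>C x)" by (rule good_id)
      fix s assume s: "s \<in> range Q"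
      show "0 + (- 1 / z2) *\<^sub>C (\<beta> *\<^sub>C U s - z2 *\<^sub>C s) = s"
        using False by (simp add: True scaleC_minus_right scaleC_scaleC scaleC_one scaleC_minus1)
    qed
  next
    case z2: True
    show ?thesis
    proof (cases "z1 = 0")
      case True
      show ?thesis
      proof (intro exI conjI ballI)
        show "good (\<lambda>x. (1 / \<alpha>) *\<^sub>C U x)" by (rule good_U)
        show "good (\<lambda>x. 0)" by (rule good_zero)
        fix s assume s: "s \<in> range Q"
        show "(1 / \<alpha>) *\<^sub>C U (\<alpha> *\<^sub>C cadjoint U s - z1 *\<^sub>C s) + 0 = s"
          using a0 by (simp add: True bcl_scaleC[OF Uf(1)] Uf(4) scaleC_scaleC scaleC_one)
      qed
    next
      case False
      define m where "m = \<alpha> / z1"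
      have mnot: "m \<notin> spectrum_on (range Q) U"
      proof
        assume ms: "m \<in> spectrum_on (range Q) U"
        have m1: "cmod m = 1" using circle[OF ms] .
        have "cmod \<alpha> = cmod z1" using m1 False by (simp add: m_def norm_divide)
        then have aa: "\<alpha> * cnj \<alpha> = z1 * cnj z1" by (metis complex_norm_square)
        have "\<alpha> * cnj m = z1" using False aa by (simp add: m_def field_simps)
        then show False using notin[OF ms] z2 \<open>\<beta> = 0\<close> by simp
      qed
      obtain R where R: "good R" "\<forall>s\<in>range Q. R (U s - m *\<^sub>C s) = s" using good_R[OF mnot] by blast
      have gX: "good (\<lambda>x. (- 1 / z1) *\<^sub>C R (U x))"
        using good_comp[OF good_id good_comp[OF R(1) good_U[of 1]]] by (simp add: scaleC_one)
      show ?thesis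
      proof (intro exI conjI ballI)
        show "good (\<lambda>x. (- 1 / z1) *\<^sub>C R (U x))" by (rule gX)
        show "good (\<lambda>x. 0)" by (rule good_zero)
        fix s assume s: "s \<in> range Q"
        have t: "U s - m *\<^sub>C s \<in> range Q" using csub_diff[OF S_csub US[OF s] csub_sc[OF S_csub s]] .
        have e: "U (\<alpha> *\<^sub>C cadjoint U s - z1 *\<^sub>C s) = (- z1) *\<^sub>C (U s - m *\<^sub>C s)"
        proof -
          have "U (\<alpha> *\<^sub>C cadjoint U s - z1 *\<^sub>C s) = \<alpha> *\<^sub>C s - z1 *\<^sub>C U s"
            by (simp add: bcl_diff[OF Uf(1)] bcl_scaleC[OF Uf(1)] Uf(4))
          moreover have "(- z1) *\<^sub>C (U s - m *\<^sub>C s) = (z1 * m) *\<^sub>C s - z1 *\<^sub>C U s"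
            by (simp add: scaleC_diff_right scaleC_scaleC scaleC_minus_left)
          moreover have "z1 * m = \<alpha>" using False by (simp add: m_def)
          ultimately show ?thesis by simp
        qed
        have "R ((- z1) *\<^sub>C (U s - m *\<^sub>C s)) = (- z1) *\<^sub>C s" using goodD(3)[OF R(1) t] R(2) s by simp
        then show "(- 1 / z1) *\<^sub>C R (U (\<alpha> *\<^sub>C cadjoint U s - z1 *\<^sub>C s)) + 0 = s"
          using False by (simp add: e scaleC_scaleC scaleC_one)
      qed
    qed
  qed
qed

lemma comp_break:
  assumes sp: "l \<in> spectrum_on (range Q) U"
  shows "\<exists>k\<in>range Q. \<forall>s\<in>range Q. \<forall>t\<in>range Q.
     (\<alpha> *\<^sub>C cadjoint U s - (\<alpha> * cnj l) *\<^sub>C s) + (\<beta> *\<^sub>C U t - (\<beta> * l) *\<^sub>C t) \<noteq> k"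
proof -
  obtain k where k: "k \<in> range Q" "\<forall>w\<in>range Q. U w - l *\<^sub>C w \<noteq> k" using key[OF sp] by blast
  have l1: "cmod l = 1" using circle[OF sp] .
  have cl: "l * cnj l = 1" using cnj_l[OF l1] by (simp add: mult.commute)
  show ?thesis
  proof (intro bexI[OF _ k(1)] ballI)
    fix s t assume s: "s \<in> range Q" and t: "t \<in> range Q"
    define w where "w = (- (\<alpha> * cnj l)) *\<^sub>C cadjoint U s + \<beta> *\<^sub>C t"
    have wS: "w \<in> range Q" unfolding w_def
      using csub_add[OF S_csub csub_sc[OF S_csub UaS[OF s]] csub_sc[OF S_csub t]] .
    have Uw: "U w = (- (\<alpha> * cnj l)) *\<^sub>C s + \<beta> *\<^sub>C U t"
      by (simp add: w_def bcl_add[OF Uf(1)] bcl_scaleC[OF Uf(1)] Uf(4))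
    have lw: "l *\<^sub>C w = (- \<alpha>) *\<^sub>C cadjoint U s + (\<beta> * l) *\<^sub>C t"
    proof -
      have e1: "l *\<^sub>C w = (l * (- (\<alpha> * cnj l))) *\<^sub>C cadjoint U s + (l * \<beta>) *\<^sub>C t"
        by (simp only: w_def scaleC_add_right scaleC_scaleC)
      have e2: "l * (- (\<alpha> * cnj l)) = - \<alpha>"
      proof -
        have "l * (- (\<alpha> * cnj l)) = - (\<alpha> * (l * cnj l))" by (simp add: algebra_simps)
        then show ?thesis using cl by simp
      qed
      have e3: "l * \<beta> = \<beta> * l" by (rule mult.commute)
      show ?thesis using e1 unfolding e2 e3 .
    qed
    have "U w - l *\<^sub>C w = (\<alpha> *\<^sub>C cadjoint U s - (\<alpha> * cnj l) *\<^sub>C s) + (\<beta> *\<^sub>C U t - (\<beta> * l) *\<^sub>C t)"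
      by (simp add: Uw lw scaleC_minus_left algebra_simps)
    then show "(\<alpha> *\<^sub>C cadjoint U s - (\<alpha> * cnj l) *\<^sub>C s) + (\<beta> *\<^sub>C U t - (\<beta> * l) *\<^sub>C t) \<noteq> k"
      using k(2) wS by metis
  qed
qed

end


lemma add_zero_from:
  fixes A :: "'b::ab_group_add \<Rightarrow> 'a::ab_group_add"
  assumes a: "\<And>x y. A (x + y) = A x + A y"
  shows "A 0 = 0"
proof -
  have "A (0 + 0) = A 0 + A 0" by (rule a)
  then show ?thesis by simp
qed

lemma add_minus_from:
  fixes A :: "'b::ab_group_add \<Rightarrow> 'a::ab_group_add"
  assumes a: "\<And>x y. A (x + y) = A x + A y"
  shows "A (- x) = - A x"
proof -
  have z: "A 0 = 0" using add_zero_from[of A] a by blast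
  have "A (x + - x) = A x + A (- x)" by (rule a)
  then have "A x + A (- x) = 0" using z by simp
  then show ?thesis by (simp add: eq_neg_iff_add_eq_0 add.commute)
qed

lemma add_diff_from:
  fixes A :: "'b::ab_group_add \<Rightarrow> 'a::ab_group_add"
  assumes a: "\<And>x y. A (x + y) = A x + A y"
  shows "A (x - y) = A x - A y"
proof -
  have "A (x + - y) = A x + A (- y)" by (rule a)
  then show ?thesis using add_minus_from[of A y, OF a] by simp
qed

lemma bezout_exact:
  fixes A B X Y :: "'e::complex_inner \<Rightarrow> 'e"
  assumes Aadd: "\<And>x y. A (x + y) = A x + A y" and Badd: "\<And>x y. B (x + y) = B x + B y"
    and AB: "\<And>x. A (B x) = B (A x)"
    and Xadd: "\<And>x y. X (x + y) = X x + X y" and Yadd: "\<And>x y. Y (x + y) = Y x + Y y"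
    and XA: "\<And>x. A (X x) = X (A x)" and YA: "\<And>x. A (Y x) = Y (A x)"
    and XB: "\<And>x. B (X x) = X (B x)" and YB: "\<And>x. B (Y x) = Y (B x)"
    and bez: "\<And>x. X (A x) + Y (B x) = x"
  shows "koszul_exact A B"
proof -
  have A0: "A 0 = 0" using add_zero_from[of A] Aadd by blast
  have B0: "B 0 = 0" using add_zero_from[of B] Badd by blast
  have X0: "X 0 = 0" using add_zero_from[of X] Xadd by blast
  have Y0: "Y 0 = 0" using add_zero_from[of Y] Yadd by blast
  have Bm: "B (- x) = - B x" for x using add_minus_from[of B x] Badd by blast
  have s1: "{h. (A h, B h) = (0, 0)} = {0}"
  proof (intro set_eqI iffI)
    fix h :: 'e assume "h \<in> {h. (A h, B h) = (0, 0)}"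
    then have "A h = 0" "B h = 0" by auto
    then have "h = X 0 + Y 0" using bez[of h] by simp
    then show "h \<in> {0}" using X0 Y0 by simp
  next
    fix h :: 'e assume "h \<in> {0}" then show "h \<in> {h. (A h, B h) = (0, 0)}" using A0 B0 by simp
  qed
  have s2: "{(h1, h2). A h2 - B h1 = 0} = (\<lambda>h. (A h, B h)) ` UNIV"
  proof (intro set_eqI iffI)
    fix p assume "p \<in> {(h1, h2). A h2 - B h1 = 0}"
    then obtain h1 h2 where p: "p = (h1, h2)" and e: "A h2 = B h1" by auto
    define h where "h = X h1 + Y h2"
    have "A h = X (A h1) + Y (A h2)" by (simp add: h_def Aadd XA YA)
    also have "... = h1" using e bez by simp
    finally have 1: "A h = h1" .
    have "B h = X (B h1) + Y (B h2)" by (simp add: h_def Badd XB YB)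
    also have "... = h2" using e[symmetric] bez by simp
    finally have 2: "B h = h2" .
    show "p \<in> (\<lambda>h. (A h, B h)) ` UNIV" using 1 2 p by auto
  next
    fix p assume "p \<in> (\<lambda>h. (A h, B h)) ` UNIV"
    then show "p \<in> {(h1, h2). A h2 - B h1 = 0}" using AB by auto
  qed
  have s3: "(\<lambda>(h1, h2). A h2 - B h1) ` UNIV = UNIV"
  proof (intro set_eqI iffI)
    fix k :: 'e
    have "A (X k) - B (- Y k) = k" using bez[of k] by (simp add: XA YB Bm)
    then show "k \<in> (\<lambda>(h1, h2). A h2 - B h1) ` UNIV" by (intro image_eqI[of _ _ "(- Y k, X k)"]) auto
  qed simp
  show ?thesis unfolding koszul_exact_def using s1 s2 s3 by blast
qed

lemma split_exact:
  fixes A B P X1 Y1 X2 Y2 :: "'e::complex_inner \<Rightarrow> 'e"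
  assumes Aadd: "\<And>x y. A (x + y) = A x + A y" and Badd: "\<And>x y. B (x + y) = B x + B y"
    and AB: "\<And>x. A (B x) = B (A x)"
    and Padd: "\<And>x y. P (x + y) = P x + P y" and Pid: "\<And>x. P (P x) = P x"
    and PA: "\<And>x. P (A x) = A (P x)" and PB: "\<And>x. P (B x) = B (P x)"
    and X1add: "\<And>s t. P s = s \<Longrightarrow> P t = t \<Longrightarrow> X1 (s + t) = X1 s + X1 t"
    and Y1add: "\<And>s t. P s = s \<Longrightarrow> P t = t \<Longrightarrow> Y1 (s + t) = Y1 s + Y1 t"
    and X1A: "\<And>s. P s = s \<Longrightarrow> X1 (A s) = A (X1 s)" and X1B: "\<And>s. P s = s \<Longrightarrow> X1 (B s) = B (X1 s)"
    and Y1A: "\<And>s. P s = s \<Longrightarrow> Y1 (A s) = A (Y1 s)" and Y1B: "\<And>s. P s = s \<Longrightarrow> Y1 (B s) = B (Y1 s)"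
    and bez1: "\<And>s. P s = s \<Longrightarrow> X1 (A s) + Y1 (B s) = s"
    and X2add: "\<And>s t. P s = 0 \<Longrightarrow> P t = 0 \<Longrightarrow> X2 (s + t) = X2 s + X2 t"
    and Y2add: "\<And>s t. P s = 0 \<Longrightarrow> P t = 0 \<Longrightarrow> Y2 (s + t) = Y2 s + Y2 t"
    and X2A: "\<And>s. P s = 0 \<Longrightarrow> X2 (A s) = A (X2 s)" and X2B: "\<And>s. P s = 0 \<Longrightarrow> X2 (B s) = B (X2 s)"
    and Y2A: "\<And>s. P s = 0 \<Longrightarrow> Y2 (A s) = A (Y2 s)" and Y2B: "\<And>s. P s = 0 \<Longrightarrow> Y2 (B s) = B (Y2 s)"
    and bez2: "\<And>s. P s = 0 \<Longrightarrow> X2 (A s) + Y2 (B s) = s"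
  shows "koszul_exact A B"
proof -
  have Pdiff: "P (x - y) = P x - P y" for x y using add_diff_from[of P] Padd by blast
  have Adiff: "A (x - y) = A x - A y" for x y using add_diff_from[of A] Aadd by blast
  have Bdiff: "B (x - y) = B x - B y" for x y using add_diff_from[of B] Badd by blast
  have P1: "P (P v) = P v" for v by (rule Pid)
  have P2: "P (v - P v) = 0" for v by (simp add: Pdiff Pid)
  have split: "(u + v) - P (u + v) = (u - P u) + (v - P v)" for u v by (simp add: Padd)
  define X where "X v = X1 (P v) + X2 (v - P v)" for v
  define Y where "Y v = Y1 (P v) + Y2 (v - P v)" for v
  show ?thesis
  proof (rule bezout_exact[OF Aadd Badd AB])
    show "X (x + y) = X x + X y" for x y
      unfolding X_def split by (simp add: Padd X1add[OF P1 P1] X2add[OF P2 P2])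
    show "Y (x + y) = Y x + Y y" for x y
      unfolding Y_def split by (simp add: Padd Y1add[OF P1 P1] Y2add[OF P2 P2])
    show "A (X x) = X (A x)" for x
      unfolding X_def by (simp add: Aadd PA Adiff X1A[OF P1, symmetric] X2A[OF P2, symmetric])
    show "A (Y x) = Y (A x)" for x
      unfolding Y_def by (simp add: Aadd PA Adiff Y1A[OF P1, symmetric] Y2A[OF P2, symmetric])
    show "B (X x) = X (B x)" for x
      unfolding X_def by (simp add: Badd PB Bdiff X1B[OF P1, symmetric] X2B[OF P2, symmetric])
    show "B (Y x) = Y (B x)" for x
      unfolding Y_def by (simp add: Badd PB Bdiff Y1B[OF P1, symmetric] Y2B[OF P2, symmetric])
    show "X (A x) + Y (B x) = x" for x
    proof -
      have "X (A x) + Y (B x) = (X1 (A (P x)) + Y1 (B (P x))) + (X2 (A (x - P x)) + Y2 (B (x - P x)))"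
        by (simp add: X_def Y_def PA PB Adiff Bdiff algebra_simps)
      also have "... = P x + (x - P x)" using bez1[OF P1] bez2[OF P2] by simp
      finally show ?thesis by simp
    qed
  qed
qed

context uq begin

lemma good_poly:
  assumes g: "good X" and s: "s \<in> range Q"
  shows "X (a *\<^sub>C cadjoint U s - b *\<^sub>C s) = a *\<^sub>C cadjoint U (X s) - b *\<^sub>C X s"
    and "X (a *\<^sub>C U s - b *\<^sub>C s) = a *\<^sub>C U (X s) - b *\<^sub>C X s"
proof -
  have "X (a *\<^sub>C cadjoint U s - b *\<^sub>C s) = X (a *\<^sub>C cadjoint U s) - X (b *\<^sub>C s)"
    by (rule good_diff[OF g csub_sc[OF S_csub UaS[OF s]] csub_sc[OF S_csub s]])
  also have "... = a *\<^sub>C cadjoint U (X s) - b *\<^sub>C X s"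
    by (simp add: goodD(3)[OF g UaS[OF s]] goodD(3)[OF g s] goodD(5)[OF g s])
  finally show "X (a *\<^sub>C cadjoint U s - b *\<^sub>C s) = a *\<^sub>C cadjoint U (X s) - b *\<^sub>C X s" .
  have "X (a *\<^sub>C U s - b *\<^sub>C s) = X (a *\<^sub>C U s) - X (b *\<^sub>C s)"
    by (rule good_diff[OF g csub_sc[OF S_csub US[OF s]] csub_sc[OF S_csub s]])
  also have "... = a *\<^sub>C U (X s) - b *\<^sub>C X s"
    by (simp add: goodD(3)[OF g US[OF s]] goodD(3)[OF g s] goodD(4)[OF g s])
  finally show "X (a *\<^sub>C U s - b *\<^sub>C s) = a *\<^sub>C U (X s) - b *\<^sub>C X s" .
qed

end


locale spec =
  fixes U P :: "'e::complex_hilbert \<Rightarrow> 'e" and z :: complex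
  assumes unit: "unitary U" and proj: "projection P" and PU: "\<And>e. P (U e) = U (P e)"
begin

lemmas Uf = unitary_facts[OF unit]
lemmas Pf = projection_facts[OF proj]

lemma bcQ2: "bounded_clinear (\<lambda>x. x - P x)"
  unfolding bounded_clinear_def
proof (intro conjI allI exI)
  show "x + y - P (x + y) = x - P x + (y - P y)" for x y by (simp add: bcl_add[OF Pf(1)] algebra_simps)
  show "c *\<^sub>C x - P (c *\<^sub>C x) = c *\<^sub>C (x - P x)" for c x by (simp add: bcl_scaleC[OF Pf(1)] scaleC_diff_right)
  show "norm (x - P x) \<le> norm x * 1" for x
  proof -
    have "(norm (x - P x))\<^sup>2 \<le> (norm x)\<^sup>2" using Pf(5)[of x] by simp
    then have "norm (x - P x) \<le> norm x" by (rule power2_le_imp_le) simp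
    then show ?thesis by simp
  qed
qed

sublocale I1: uq U P
  by unfold_locales (simp_all add: unit Pf(1) Pf(2) PU)

sublocale I2: uq U "\<lambda>x. x - P x"
  by unfold_locales (simp_all add: unit bcQ2 Pf(6) PU bcl_diff[OF Uf(1)] bcl_diff[OF Pf(1)] Pf(2))

lemma PUa: "P (cadjoint U x) = cadjoint U (P x)" by (rule I1.QUa)

lemma S1_iff: "s \<in> range P \<longleftrightarrow> P s = s" by (rule I1.S_iff)
lemma S2_iff: "s \<in> range (\<lambda>x. x - P x) \<longleftrightarrow> P s = 0"
  using I2.S_iff[of s] by auto

lemma phi1_form: "bcl_phi1 P U z x = z *\<^sub>C cadjoint U (P x) + cadjoint U (x - P x)"
  by (simp add: bcl_phi1_def bcl_add[OF Uf(8)] bcl_scaleC[OF Uf(8)] add.commute)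

lemma phi2_form: "bcl_phi2 P U z x = U (P x) + z *\<^sub>C U (x - P x)"
  by (simp add: bcl_phi2_def PU bcl_diff[OF Uf(1)])

lemma Pdiff: "P (x - y) = P x - P y" by (rule bcl_diff[OF Pf(1)])

lemma phi1_add: "bcl_phi1 P U z (x + y) = bcl_phi1 P U z x + bcl_phi1 P U z y"
  by (simp add: phi1_form bcl_add[OF Pf(1)] bcl_add[OF Uf(8)] bcl_diff[OF Uf(8)] scaleC_add_right algebra_simps)
lemma phi2_add: "bcl_phi2 P U z (x + y) = bcl_phi2 P U z x + bcl_phi2 P U z y"
proof -
  have e: "x + y - P (x + y) = (x - P x) + (y - P y)" by (simp add: bcl_add[OF Pf(1)] algebra_simps)
  show ?thesis
    by (simp only: phi2_form e bcl_add[OF Uf(1)] scaleC_add_right) (simp add: bcl_add[OF Pf(1)] bcl_add[OF Uf(1)] algebra_simps)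
qed
lemma phi1_sc: "bcl_phi1 P U z (c *\<^sub>C x) = c *\<^sub>C bcl_phi1 P U z x"
  by (simp add: phi1_form bcl_scaleC[OF Pf(1)] bcl_scaleC[OF Uf(8)] bcl_diff[OF Uf(8)] scaleC_add_right
      scaleC_diff_right scaleC_scaleC mult.commute)
lemma phi2_sc: "bcl_phi2 P U z (c *\<^sub>C x) = c *\<^sub>C bcl_phi2 P U z x"
  by (simp add: phi2_form bcl_scaleC[OF Pf(1)] bcl_scaleC[OF Uf(1)] bcl_diff[OF Uf(1)] scaleC_add_right
      scaleC_diff_right scaleC_scaleC mult.commute)

lemma phi1_S1: "P s = s \<Longrightarrow> bcl_phi1 P U z s = z *\<^sub>C cadjoint U s"
  by (simp add: phi1_form bcl_zero[OF Uf(8)])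
lemma phi1_S2: "P s = 0 \<Longrightarrow> bcl_phi1 P U z s = cadjoint U s"
  by (simp add: phi1_form bcl_zero[OF Uf(8)])
lemma phi2_S1: "P s = s \<Longrightarrow> bcl_phi2 P U z s = U s"
  by (simp add: phi2_form bcl_zero[OF Uf(1)])
lemma phi2_S2: "P s = 0 \<Longrightarrow> bcl_phi2 P U z s = z *\<^sub>C U s"
  by (simp add: phi2_form bcl_zero[OF Uf(1)])

lemma P_phi1: "P (bcl_phi1 P U z x) = bcl_phi1 P U z (P x)"
  by (simp add: phi1_form bcl_add[OF Pf(1)] bcl_scaleC[OF Pf(1)] PUa Pdiff Pf(2) bcl_zero[OF Uf(8)])
lemma P_phi2: "P (bcl_phi2 P U z x) = bcl_phi2 P U z (P x)"
  by (simp add: phi2_form bcl_add[OF Pf(1)] bcl_scaleC[OF Pf(1)] PU Pdiff Pf(2) bcl_zero[OF Uf(1)])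

lemma phi12: "bcl_phi1 P U z (bcl_phi2 P U z x) = z *\<^sub>C x"
proof -
  have a: "P (bcl_phi2 P U z x) = U (P x)" by (simp add: P_phi2 phi2_S1 Pf(2))
  have b: "bcl_phi2 P U z x - U (P x) = z *\<^sub>C U (x - P x)" by (simp add: phi2_form)
  have "bcl_phi1 P U z (bcl_phi2 P U z x) = z *\<^sub>C cadjoint U (U (P x)) + cadjoint U (z *\<^sub>C U (x - P x))"
    by (simp only: phi1_form a b)
  also have "... = z *\<^sub>C P x + z *\<^sub>C (x - P x)" by (simp add: Uf(3) bcl_scaleC[OF Uf(8)])
  also have "... = z *\<^sub>C x" by (simp flip: scaleC_add_right)
  finally show ?thesis .
qed

lemma phi21: "bcl_phi2 P U z (bcl_phi1 P U z x) = z *\<^sub>C x"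
proof -
  have a: "P (bcl_phi1 P U z x) = z *\<^sub>C cadjoint U (P x)" by (simp add: P_phi1 phi1_S1 Pf(2))
  have b: "bcl_phi1 P U z x - z *\<^sub>C cadjoint U (P x) = cadjoint U (x - P x)" by (simp add: phi1_form)
  have "bcl_phi2 P U z (bcl_phi1 P U z x) = U (z *\<^sub>C cadjoint U (P x)) + z *\<^sub>C U (cadjoint U (x - P x))"
    by (simp only: phi2_form a b)
  also have "... = z *\<^sub>C P x + z *\<^sub>C (x - P x)" by (simp add: Uf(4) bcl_scaleC[OF Uf(1)])
  also have "... = z *\<^sub>C x" by (simp flip: scaleC_add_right)
  finally show ?thesis .
qed

definition "AA z1 x = bcl_phi1 P U z x - z1 *\<^sub>C x"
definition "BB z2 x = bcl_phi2 P U z x - z2 *\<^sub>C x"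

lemma AA_add: "AA z1 (x + y) = AA z1 x + AA z1 y"
  by (simp add: AA_def phi1_add scaleC_add_right algebra_simps)
lemma BB_add: "BB z2 (x + y) = BB z2 x + BB z2 y"
  by (simp add: BB_def phi2_add scaleC_add_right algebra_simps)

lemma AB_comm: "AA z1 (BB z2 x) = BB z2 (AA z1 x)"
proof -
  have p1d: "bcl_phi1 P U z (a - b) = bcl_phi1 P U z a - bcl_phi1 P U z b" for a b
    using add_diff_from[of "bcl_phi1 P U z"] phi1_add by blast
  have p2d: "bcl_phi2 P U z (a - b) = bcl_phi2 P U z a - bcl_phi2 P U z b" for a b
    using add_diff_from[of "bcl_phi2 P U z"] phi2_add by blast
  show ?thesis
    by (simp add: AA_def BB_def p1d p2d phi1_sc phi2_sc phi12 phi21 scaleC_diff_right scaleC_scaleC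
        mult.commute algebra_simps)
qed

lemma PAA: "P (AA z1 x) = AA z1 (P x)"
  by (simp add: AA_def Pdiff P_phi1 bcl_scaleC[OF Pf(1)])
lemma PBB: "P (BB z2 x) = BB z2 (P x)"
  by (simp add: BB_def Pdiff P_phi2 bcl_scaleC[OF Pf(1)])

lemma AA_S1: "P s = s \<Longrightarrow> AA z1 s = z *\<^sub>C cadjoint U s - z1 *\<^sub>C s"
  by (simp add: AA_def phi1_S1)
lemma AA_S2: "P s = 0 \<Longrightarrow> AA z1 s = 1 *\<^sub>C cadjoint U s - z1 *\<^sub>C s"
  by (simp add: AA_def phi1_S2 scaleC_one)
lemma BB_S1: "P s = s \<Longrightarrow> BB z2 s = 1 *\<^sub>C U s - z2 *\<^sub>C s"
  by (simp add: BB_def phi2_S1 scaleC_one)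
lemma BB_S2: "P s = 0 \<Longrightarrow> BB z2 s = z *\<^sub>C U s - z2 *\<^sub>C s"
  by (simp add: BB_def phi2_S2)

end


lemma breaks_not_exact:
  fixes A B :: "'e::complex_inner \<Rightarrow> 'e"
  assumes Badd: "\<And>x y. B (x + y) = B x + B y" and br: "koszul_breaks_stage3 A B"
  shows "\<not> koszul_exact A B"
proof
  assume ex: "koszul_exact A B"
  have "{A x + B y | x y. True} = UNIV"
  proof (intro set_eqI iffI)
    fix k :: 'e
    have "k \<in> (\<lambda>(h1, h2). A h2 - B h1) ` UNIV" using ex unfolding koszul_exact_def by blast
    then obtain h1 h2 where "k = A h2 - B h1" by auto
    then have "k = A h2 + B (- h1)" using add_minus_from[of B h1] Badd by simp
    then show "k \<in> {A x + B y | x y. True}" by blast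
  qed simp
  then show False using br unfolding koszul_breaks_stage3_def by simp
qed

context spec begin

lemma AA_eq: "AA z1 = (\<lambda>x. bcl_phi1 P U z x - z1 *\<^sub>C x)" by (rule ext) (simp add: AA_def)
lemma BB_eq: "BB z2 = (\<lambda>x. bcl_phi2 P U z x - z2 *\<^sub>C x)" by (rule ext) (simp add: BB_def)

lemma AA_diff: "AA z1 (x - y) = AA z1 x - AA z1 y"
  using add_diff_from[of "AA z1"] AA_add by blast
lemma BB_diff: "BB z2 (x - y) = BB z2 x - BB z2 y"
  using add_diff_from[of "BB z2"] BB_add by blast

lemma exact_out:
  assumes n1: "(z1, z2) \<notin> {(z * cnj l, l) | l. l \<in> spectrum_on (range P) U}"
    and n2: "(z1, z2) \<notin> {(cnj m, z * m) | m. m \<in> spectrum_on (range (\<lambda>x. x - P x)) U}"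
  shows "koszul_exact (AA z1) (BB z2)"
proof -
  have "\<exists>X Y. I1.good X \<and> I1.good Y \<and>
    (\<forall>s\<in>range P. X (z *\<^sub>C cadjoint U s - z1 *\<^sub>C s) + Y (1 *\<^sub>C U s - z2 *\<^sub>C s) = s)"
    by (rule I1.comp_bezout) (use n1 in auto)
  then obtain X1 Y1 where g1: "I1.good X1" "I1.good Y1"
    and b1: "\<And>s. s \<in> range P \<Longrightarrow> X1 (z *\<^sub>C cadjoint U s - z1 *\<^sub>C s) + Y1 (1 *\<^sub>C U s - z2 *\<^sub>C s) = s"
    by blast
  have "\<exists>X Y. I2.good X \<and> I2.good Y \<and>
    (\<forall>s\<in>range (\<lambda>x. x - P x). X (1 *\<^sub>C cadjoint U s - z1 *\<^sub>C s) + Y (z *\<^sub>C U s - z2 *\<^sub>C s) = s)"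
    by (rule I2.comp_bezout) (use n2 in auto)
  then obtain X2 Y2 where g2: "I2.good X2" "I2.good Y2"
    and b2: "\<And>s. s \<in> range (\<lambda>x. x - P x) \<Longrightarrow> X2 (1 *\<^sub>C cadjoint U s - z1 *\<^sub>C s) + Y2 (z *\<^sub>C U s - z2 *\<^sub>C s) = s"
    by blast
  have in1: "P s = s \<Longrightarrow> P (X s) = X s" if "I1.good X" for X s
    using I1.goodD(1)[OF that, of s] by (simp add: S1_iff)
  have in2: "P s = 0 \<Longrightarrow> P (X s) = 0" if "I2.good X" for X s
    using I2.goodD(1)[OF that, of s] by (simp add: S2_iff)
  show ?thesis
  proof (rule split_exact[of "AA z1" "BB z2" P X1 Y1 X2 Y2])
    show "AA z1 (x + y) = AA z1 x + AA z1 y" for x y by (rule AA_add)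
    show "BB z2 (x + y) = BB z2 x + BB z2 y" for x y by (rule BB_add)
    show "AA z1 (BB z2 x) = BB z2 (AA z1 x)" for x by (rule AB_comm)
    show "P (x + y) = P x + P y" for x y by (rule bcl_add[OF Pf(1)])
    show "P (P x) = P x" for x by (rule Pf(2))
    show "P (AA z1 x) = AA z1 (P x)" for x by (rule PAA)
    show "P (BB z2 x) = BB z2 (P x)" for x by (rule PBB)
    show "X1 (s + t) = X1 s + X1 t" if "P s = s" "P t = t" for s t
      by (rule I1.goodD(2)[OF g1(1)]) (simp_all add: S1_iff that)
    show "Y1 (s + t) = Y1 s + Y1 t" if "P s = s" "P t = t" for s t
      by (rule I1.goodD(2)[OF g1(2)]) (simp_all add: S1_iff that)
    show "X2 (s + t) = X2 s + X2 t" if "P s = 0" "P t = 0" for s t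
      by (rule I2.goodD(2)[OF g2(1)]) (simp_all add: S2_iff that)
    show "Y2 (s + t) = Y2 s + Y2 t" if "P s = 0" "P t = 0" for s t
      by (rule I2.goodD(2)[OF g2(2)]) (simp_all add: S2_iff that)
    show "X1 (AA z1 s) = AA z1 (X1 s)" if "P s = s" for s
      using that in1[OF g1(1) that] I1.good_poly(1)[OF g1(1)] S1_iff by (simp add: AA_S1)
    show "Y1 (AA z1 s) = AA z1 (Y1 s)" if "P s = s" for s
      using that in1[OF g1(2) that] I1.good_poly(1)[OF g1(2)] S1_iff by (simp add: AA_S1)
    show "X1 (BB z2 s) = BB z2 (X1 s)" if "P s = s" for s
      using that in1[OF g1(1) that] I1.good_poly(2)[OF g1(1)] S1_iff by (simp add: BB_S1)
    show "Y1 (BB z2 s) = BB z2 (Y1 s)" if "P s = s" for s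
      using that in1[OF g1(2) that] I1.good_poly(2)[OF g1(2)] S1_iff by (simp add: BB_S1)
    show "X2 (AA z1 s) = AA z1 (X2 s)" if "P s = 0" for s
      using that in2[OF g2(1) that] I2.good_poly(1)[OF g2(1)] S2_iff by (simp add: AA_S2)
    show "Y2 (AA z1 s) = AA z1 (Y2 s)" if "P s = 0" for s
      using that in2[OF g2(2) that] I2.good_poly(1)[OF g2(2)] S2_iff by (simp add: AA_S2)
    show "X2 (BB z2 s) = BB z2 (X2 s)" if "P s = 0" for s
      using that in2[OF g2(1) that] I2.good_poly(2)[OF g2(1)] S2_iff by (simp add: BB_S2)
    show "Y2 (BB z2 s) = BB z2 (Y2 s)" if "P s = 0" for s
      using that in2[OF g2(2) that] I2.good_poly(2)[OF g2(2)] S2_iff by (simp add: BB_S2)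
    show "X1 (AA z1 s) + Y1 (BB z2 s) = s" if "P s = s" for s
      using b1[of s] that S1_iff by (simp add: AA_S1 BB_S1)
    show "X2 (AA z1 s) + Y2 (BB z2 s) = s" if "P s = 0" for s
      using b2[of s] that S2_iff by (simp add: AA_S2 BB_S2)
  qed
qed

lemma break1:
  assumes sp: "l \<in> spectrum_on (range P) U"
  shows "koszul_breaks_stage3 (AA (z * cnj l)) (BB l)"
proof -
  obtain k where k: "k \<in> range P" and nk: "\<forall>s\<in>range P. \<forall>t\<in>range P.
     (z *\<^sub>C cadjoint U s - (z * cnj l) *\<^sub>C s) + (1 *\<^sub>C U t - (1 * l) *\<^sub>C t) \<noteq> k"
    using I1.comp_break[OF sp, of z 1] by blast
  show ?thesis unfolding koszul_breaks_stage3_def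
  proof
    assume "{AA (z * cnj l) x + BB l y | x y. True} = UNIV"
    then obtain x y where kxy: "k = AA (z * cnj l) x + BB l y" by blast
    have Pk: "P k = k" using k S1_iff by blast
    have "k = P k" using Pk by simp
    also have "... = P (AA (z * cnj l) x) + P (BB l y)" by (simp add: kxy bcl_add[OF Pf(1)])
    also have "... = AA (z * cnj l) (P x) + BB l (P y)" by (simp add: PAA PBB)
    also have "... = (z *\<^sub>C cadjoint U (P x) - (z * cnj l) *\<^sub>C P x) + (1 *\<^sub>C U (P y) - (1 * l) *\<^sub>C P y)"
      by (simp add: AA_S1 BB_S1 Pf(2))
    finally show False using nk by blast
  qed
qed

lemma break2:
  assumes sp: "m \<in> spectrum_on (range (\<lambda>x. x - P x)) U"
  shows "koszul_breaks_stage3 (AA (cnj m)) (BB (z * m))"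
proof -
  obtain k where k: "k \<in> range (\<lambda>x. x - P x)" and nk: "\<forall>s\<in>range (\<lambda>x. x - P x). \<forall>t\<in>range (\<lambda>x. x - P x).
     (1 *\<^sub>C cadjoint U s - (1 * cnj m) *\<^sub>C s) + (z *\<^sub>C U t - (z * m) *\<^sub>C t) \<noteq> k"
    using I2.comp_break[OF sp, of 1 z] by blast
  show ?thesis unfolding koszul_breaks_stage3_def
  proof
    assume "{AA (cnj m) x + BB (z * m) y | x y. True} = UNIV"
    then obtain x y where kxy: "k = AA (cnj m) x + BB (z * m) y" by blast
    have Pk: "P k = 0" using k S2_iff by blast
    have "k = k - P k" using Pk by simp
    also have "... = AA (cnj m) (x - P x) + BB (z * m) (y - P y)"
      by (simp add: kxy bcl_add[OF Pf(1)] PAA PBB AA_diff BB_diff algebra_simps)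
    also have "... = (1 *\<^sub>C cadjoint U (x - P x) - (1 * cnj m) *\<^sub>C (x - P x)) + (z *\<^sub>C U (y - P y) - (z * m) *\<^sub>C (y - P y))"
      by (simp add: AA_S2 BB_S2 Pf(6))
    finally have "(1 *\<^sub>C cadjoint U (x - P x) - (1 * cnj m) *\<^sub>C (x - P x)) + (z *\<^sub>C U (y - P y) - (z * m) *\<^sub>C (y - P y)) = k" by simp
    moreover have "x - P x \<in> range (\<lambda>x. x - P x)" "y - P y \<in> range (\<lambda>x. x - P x)" by auto
    ultimately show False using nk by blast
  qed
qed

lemma spec_main:
  shows "taylor_spectrum (bcl_phi1 P U z) (bcl_phi2 P U z) =
      {(z * cnj l, l) | l. l \<in> spectrum_on (range P) U}
    \<union> {(cnj m, z * m) | m. m \<in> spectrum_on (range (\<lambda>x. x - P x)) U}" (is "?T = ?S1 \<union> ?S2")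
    and "\<forall>(z1, z2) \<in> taylor_spectrum (bcl_phi1 P U z) (bcl_phi2 P U z).
           koszul_breaks_stage3 (\<lambda>x. bcl_phi1 P U z x - z1 *\<^sub>C x) (\<lambda>x. bcl_phi2 P U z x - z2 *\<^sub>C x)"
proof -
  have brk: "koszul_breaks_stage3 (AA z1) (BB z2)" if "(z1, z2) \<in> ?S1 \<union> ?S2" for z1 z2
    using that break1 break2 by blast
  have T: "(z1, z2) \<in> ?T \<longleftrightarrow> \<not> koszul_exact (AA z1) (BB z2)" for z1 z2
    by (simp add: taylor_spectrum_def AA_eq BB_eq)
  show eq: "?T = ?S1 \<union> ?S2"
  proof (intro set_eqI iffI)
    fix p assume "p \<in> ?T"
    then obtain z1 z2 where p: "p = (z1, z2)" and ne: "\<not> koszul_exact (AA z1) (BB z2)"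
      using T by (metis surj_pair)
    show "p \<in> ?S1 \<union> ?S2"
    proof (rule ccontr)
      assume "p \<notin> ?S1 \<union> ?S2"
      then have "koszul_exact (AA z1) (BB z2)" using exact_out p by blast
      then show False using ne by simp
    qed
  next
    fix p assume pS: "p \<in> ?S1 \<union> ?S2"
    obtain z1 z2 where p: "p = (z1, z2)" by (metis surj_pair)
    have "\<not> koszul_exact (AA z1) (BB z2)" by (rule breaks_not_exact[OF BB_add brk]) (use pS p in simp)
    then show "p \<in> ?T" using T p by simp
  qed
  show "\<forall>(z1, z2) \<in> ?T.
           koszul_breaks_stage3 (\<lambda>x. bcl_phi1 P U z x - z1 *\<^sub>C x) (\<lambda>x. bcl_phi2 P U z x - z2 *\<^sub>C x)"
    using brk unfolding eq AA_eq BB_eq by blast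
qed

end


lemma spectrum_on_zero:
  assumes "bounded_clinear (T::'a::complex_inner \<Rightarrow> 'a)" and "S = {0}"
  shows "spectrum_on S T = {}"
proof -
  have "l \<notin> spectrum_on S T" for l
  proof -
    have "\<exists>R. (\<forall>x\<in>S. R x \<in> S) \<and> (\<forall>x\<in>S. R (T x - l *\<^sub>C x) = x \<and> T (R x) - l *\<^sub>C R x = x)
        \<and> (\<exists>K. \<forall>x\<in>S. norm (R x) \<le> K * norm x)"
      by (rule exI[of _ "\<lambda>x. 0"]) (simp add: assms bcl_zero[OF assms(1)])
    then show ?thesis unfolding spectrum_on_def by blast
  qed
  then show ?thesis by blast
qed

theorem lemma2p8:
  fixes V1 V2 :: "'h::complex_hilbert \<Rightarrow> 'h"
    and P U :: "'e::complex_hilbert \<Rightarrow> 'e"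
  assumes "isometry V1" and "isometry V2" and "V1 \<circ> V2 = V2 \<circ> V1"
    and "\<forall>x. defect V1 V2 x = 0"
    and "\<exists>x. x \<noteq> 0 \<and> cadjoint (V1 \<circ> V2) x = 0"
    and "bcl_triple V1 V2 P U"
  shows "reduces (range P) U \<and> reduces (range (\<lambda>x. x - P x)) U
    \<and> (\<forall>z. norm z < 1 \<longrightarrow>
      taylor_spectrum (bcl_phi1 P U z) (bcl_phi2 P U z) =
        (if unitary V2 then {(z * cnj l, l) | l. l \<in> spectrum_on (range P) U}
         else if unitary V1 then {(cnj m, z * m) | m. m \<in> spectrum_on (range (\<lambda>x. x - P x)) U}
         else {(z * cnj l, l) | l. l \<in> spectrum_on (range P) U}
              \<union> {(cnj m, z * m) | m. m \<in> spectrum_on (range (\<lambda>x. x - P x)) U})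
      \<and> (\<forall>(z1, z2) \<in> taylor_spectrum (bcl_phi1 P U z) (bcl_phi2 P U z).
           koszul_breaks_stage3 (\<lambda>x. bcl_phi1 P U z x - z1 *\<^sub>C x)
                                (\<lambda>x. bcl_phi2 P U z x - z2 *\<^sub>C x)))"
proof -
  have proj: "projection P" and unit: "unitary U" using assms(6) by (auto simp: bcl_triple_def)
  have "\<exists>Hp Hu W. bclm V1 V2 P U Hp Hu W"
    using assms(6) unfolding bcl_triple_def
    apply (elim conjE exE)
    subgoal for Hp Hu W
      apply (rule exI[of _ Hp], rule exI[of _ Hu], rule exI[of _ W])
      apply (unfold bclm_def)
      apply (intro conjI)
      apply (assumption | rule assms(1,2))+
      done
    done
  then obtain Hp Hu W where M: "bclm V1 V2 P U Hp Hu W" by blast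
  have PU: "\<And>e. P (U e) = U (P e)" using bclm.PU_commute[OF M assms(4)] .
  interpret S0: spec U P 0 by unfold_locales (simp_all add: unit proj PU)
  have red1: "reduces (range P) U"
    unfolding reduces_def
  proof (intro conjI image_subsetI)
    fix x assume "x \<in> range P"
    then obtain e where x: "x = P e" by blast
    show "U x \<in> range P" unfolding x PU[of e, symmetric] by (rule rangeI)
    show "cadjoint U x \<in> range P" unfolding x S0.PUa[of e, symmetric] by (rule rangeI)
  qed
  have red2: "reduces (range (\<lambda>x. x - P x)) U"
    unfolding reduces_def
  proof (intro conjI image_subsetI)
    fix x assume "x \<in> range (\<lambda>x. x - P x)"
    then obtain e where x: "x = e - P e" by blast
    have "U x = U e - P (U e)" unfolding x bcl_diff[OF S0.Uf(1)] PU ..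
    then show "U x \<in> range (\<lambda>x. x - P x)" by (rule range_eqI)
    have "cadjoint U x = cadjoint U e - P (cadjoint U e)" unfolding x bcl_diff[OF S0.Uf(8)] S0.PUa ..
    then show "cadjoint U x \<in> range (\<lambda>x. x - P x)" by (rule range_eqI)
  qed
  have main: "taylor_spectrum (bcl_phi1 P U z) (bcl_phi2 P U z) =
        (if unitary V2 then {(z * cnj l, l) | l. l \<in> spectrum_on (range P) U}
         else if unitary V1 then {(cnj m, z * m) | m. m \<in> spectrum_on (range (\<lambda>x. x - P x)) U}
         else {(z * cnj l, l) | l. l \<in> spectrum_on (range P) U}
              \<union> {(cnj m, z * m) | m. m \<in> spectrum_on (range (\<lambda>x. x - P x)) U})
      \<and> (\<forall>(z1, z2) \<in> taylor_spectrum (bcl_phi1 P U z) (bcl_phi2 P U z).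
           koszul_breaks_stage3 (\<lambda>x. bcl_phi1 P U z x - z1 *\<^sub>C x)
                                (\<lambda>x. bcl_phi2 P U z x - z2 *\<^sub>C x))" for z
  proof -
    interpret S: spec U P z by unfold_locales (simp_all add: unit proj PU)
    note sm = S.spec_main
    have e: "taylor_spectrum (bcl_phi1 P U z) (bcl_phi2 P U z) =
        (if unitary V2 then {(z * cnj l, l) | l. l \<in> spectrum_on (range P) U}
         else if unitary V1 then {(cnj m, z * m) | m. m \<in> spectrum_on (range (\<lambda>x. x - P x)) U}
         else {(z * cnj l, l) | l. l \<in> spectrum_on (range P) U}
              \<union> {(cnj m, z * m) | m. m \<in> spectrum_on (range (\<lambda>x. x - P x)) U})"
    proof (cases "unitary V2")
      case True
      have "\<And>e. P e = e" using bclm.V2_unitary_P[OF M True] .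
      then have "range (\<lambda>x. x - P x) = {0}" by auto
      then have "spectrum_on (range (\<lambda>x. x - P x)) U = {}" by (rule spectrum_on_zero[OF S.Uf(1)])
      then show ?thesis using True sm(1) by simp
    next
      case False
      show ?thesis
      proof (cases "unitary V1")
        case True
        have "\<And>e. P e = 0" using bclm.V1_unitary_P[OF M True assms(4)] .
        then have "range P = {0}" by auto
        then have "spectrum_on (range P) U = {}" by (rule spectrum_on_zero[OF S.Uf(1)])
        then show ?thesis using True False sm(1) by simp
      next
        case False2: False
        then show ?thesis using False sm(1) by simp
      qed
    qed
    show ?thesis using e sm(2) by blast
  qed
  show ?thesis using red1 red2 main by blast
qed


end
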